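(* The functional $\mathcal{E}^{\rm TF}$ is strictly convex on $\mathcal{M}^{\rm TF}$. Consequently, a minimizer of $\mathcal{E}^{\rm TF}$ over $\mathcal{M}^{\rm TF}$, if it exists, is unique.
   Context: Let $K\ge1$ be an integer and $x_1,\ldots,x_K\in\mathbb{R}^2$. Set $V_{\rm nuc}(x)=-\sum_{i=1}^K\log|x-x_i|$, $D(\sigma,\sigma)=-\frac12\iint\sigma(x)\log|x-y|\sigma(y)\,dx\,dy$, and $\mathcal{E}^{\rm TF}[\sigma]=-\int_{\mathbb{R}^2}V_{\rm nuc}\sigma+D(\sigma,\sigma)$, on $\mathcal{M}^{\rm TF}=\{\sigma\in L^\infty(\mathbb{R}^2)\cap L^1(\mathbb{R}^2,\log(2+|x|)dx):0\leq\sigma\leq1,\ \int\sigma=K\}$. *)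

theory Defs
  imports "HOL-Analysis.Analysis"
begin

type_synonym pt = "real ^ 2"

definition V_nuc :: "nat \<Rightarrow> (nat \<Rightarrow> pt) \<Rightarrow> pt \<Rightarrow> real" where
  "V_nuc K xs x = - (\<Sum>i<K. ln (norm (x - xs i)))"

definition D_TF :: "(pt \<Rightarrow> real) \<Rightarrow> real" where
  "D_TF s = - (1/2) * (\<integral>x. (\<integral>y. s x * ln (norm (x - y)) * s y \<partial>lebesgue) \<partial>lebesgue)"

definition E_TF :: "nat \<Rightarrow> (nat \<Rightarrow> pt) \<Rightarrow> (pt \<Rightarrow> real) \<Rightarrow> real" where
  "E_TF K xs s = - (\<integral>x. V_nuc K xs x * s x \<partial>lebesgue) + D_TF s"

text \<open>The admissible class M^TF (functions identified a.e. only in the statement).\<close>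
definition M_TF :: "nat \<Rightarrow> (pt \<Rightarrow> real) set" where
  "M_TF K = {s. s \<in> borel_measurable lebesgue
              \<and> (AE x in lebesgue. 0 \<le> s x \<and> s x \<le> 1)
              \<and> integrable lebesgue (\<lambda>x. s x * ln (2 + norm x))
              \<and> (\<integral>x. s x \<partial>lebesgue) = real K}"

end

theory Submission
  imports Defs "HOL-Real_Asymp.Real_Asymp"
begin

definition Lg :: "pt \<Rightarrow> real" where "Lg x = ln (2 + norm x)"
definition phi :: "pt \<Rightarrow> real" where "phi z = max 0 (- ln (norm z))"
definition cube :: "real \<Rightarrow> pt set" where "cube r = cbox (- (r *\<^sub>R One)) (r *\<^sub>R One)"

lemma Lg_ge: "ln 2 \<le> Lg x" "0 \<le> Lg x"
  unfolding Lg_def by (auto intro!: ln_ge_zero simp: add_pos_nonneg)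

lemma phi_ge: "0 \<le> phi z" unfolding phi_def by auto

lemma Lg_meas[measurable]: "Lg \<in> borel_measurable borel" unfolding Lg_def by measurable
lemma phi_meas[measurable]: "phi \<in> borel_measurable borel" unfolding phi_def by measurable

lemma log_bound: "\<bar>ln (norm (a - b))\<bar> \<le> phi (a - b) + Lg a + Lg b"
proof -
  have La: "0 \<le> Lg a" "0 \<le> Lg b" using Lg_ge by auto
  consider "norm (a - b) = 0" | "0 < norm (a-b)" "norm (a-b) < 1" | "1 \<le> norm (a-b)"
    by (meson linorder_not_le norm_ge_zero order_le_less)
  then show ?thesis
  proof cases
    case 1 then show ?thesis using La phi_ge[of "a-b"] by simp
  next
    case 2
    then have "ln (norm (a-b)) < 0" by simp
    then show ?thesis using La unfolding phi_def by simp
  next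
    case 3
    then have "0 \<le> ln (norm (a-b))" by simp
    moreover have "ln (norm (a-b)) \<le> ln ((2 + norm a) * (2 + norm b))"
    proof -
      have "norm (a-b) \<le> norm a + norm b" by (rule norm_triangle_ineq4)
      also have "\<dots> \<le> (2 + norm a) * (2 + norm b)"
        by (simp add: algebra_simps)
      finally show ?thesis using 3 by (subst ln_le_cancel_iff) auto
    qed
    moreover have "ln ((2 + norm a) * (2 + norm b)) = Lg a + Lg b"
      unfolding Lg_def by (smt (verit) ln_mult norm_ge_zero)
    ultimately show ?thesis using phi_ge[of "a-b"] by simp
  qed
qed

lemma mem_cube: "norm z \<le> r \<Longrightarrow> z \<in> cube r"
  unfolding cube_def mem_box
  by (auto simp: inner_minus_left) (smt (verit) Basis_le_norm inner_commute)+

lemma cube_borel[measurable]: "cube r \<in> sets borel" by (simp add: cube_def)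

lemma card_Basis_pt: "card (Basis :: pt set) = 2"
  by simp

lemma emeasure_cube: "0 \<le> r \<Longrightarrow> emeasure lborel (cube r) = ennreal ((2*r)^2)"
proof -
  assume r: "0 \<le> r"
  have "emeasure lborel (cube r) = ennreal (\<Prod>b\<in>(Basis::pt set). (r *\<^sub>R One - - (r *\<^sub>R One)) \<bullet> b)"
    unfolding cube_def using r by (intro emeasure_lborel_cbox) (auto simp: inner_minus_left)
  also have "(\<Prod>b\<in>(Basis::pt set). (r *\<^sub>R One - - (r *\<^sub>R One)) \<bullet> b) = (\<Prod>b\<in>(Basis::pt set). 2*r)"
  proof (intro prod.cong refl)
    fix b :: pt assume b: "b \<in> Basis"
    have "r *\<^sub>R One - - (r *\<^sub>R One) = (2*r) *\<^sub>R (One::pt)" by (simp only: diff_minus_eq_add minus_minus mult_2 scaleR_left_distrib)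
    then show "(r *\<^sub>R One - - (r *\<^sub>R One)) \<bullet> b = 2*r" using b by (simp add: inner_sum_Basis)
  qed
  also have "\<dots> = (2*r)^2" by simp
  finally show ?thesis .
qed

lemma ennreal_le_suminf: "(f::nat \<Rightarrow> ennreal) k \<le> suminf f"
proof -
  have "f k = (\<Sum>i\<in>{k}. f i)" by simp
  also have "\<dots> \<le> suminf f" by (rule sum_le_suminf) auto
  finally show ?thesis .
qed

lemma nn_integral_cube_bound:
  assumes g: "g \<in> borel_measurable lborel"
    and b: "\<And>z. ennreal (g z) \<le> (\<Sum>k. ennreal (a k) * indicator (cube (r k)) z)"
    and a: "\<And>k. 0 \<le> a k" and r: "\<And>k. 0 \<le> r k" and s: "summable (\<lambda>k. a k * (2 * r k)^2)"
  shows "(\<integral>\<^sup>+z. ennreal (g z) \<partial>lborel) < \<infinity>"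
proof -
  have "(\<integral>\<^sup>+z. ennreal (g z) \<partial>lborel) \<le> (\<integral>\<^sup>+z. (\<Sum>k. ennreal (a k) * indicator (cube (r k)) z) \<partial>lborel)"
    by (intro nn_integral_mono b)
  also have "\<dots> = (\<Sum>k. \<integral>\<^sup>+z. ennreal (a k) * indicator (cube (r k)) z \<partial>lborel)"
    by (intro nn_integral_suminf) (auto simp: cube_def)
  also have "\<dots> = (\<Sum>k. ennreal (a k * (2 * r k)^2))"
    using a r by (subst nn_integral_cmult_indicator) (auto simp: cube_def[symmetric] emeasure_cube ennreal_mult)
  also have "\<dots> = ennreal (\<Sum>k. a k * (2 * r k)^2)"
    using a r s by (intro suminf_ennreal2) auto
  finally show ?thesis by (simp add: le_less_trans)
qed

lemma summable_lin_geom: "0 \<le> q \<Longrightarrow> q < 1 \<Longrightarrow> summable (\<lambda>k::nat. (real k + 1) * q ^ k)"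
proof -
  assume q: "0 \<le> q" "q < 1"
  obtain N :: nat where N: "(real N + 2) * q \<le> ((1+q)/2) * (real N + 1)"
  proof -
    have "((\<lambda>n::nat. ((real n + 2) / (real n + 1)) * q) \<longlonglongrightarrow> 1 * q)"
    proof (intro tendsto_mult tendsto_const)
      have "(\<lambda>n::nat. (real n + 2) / (real n + 1)) = (\<lambda>n. 1 + 1 / (real n + 1))"
        by (rule ext) (simp add: field_simps)
      moreover have "(\<lambda>n::nat. 1 + 1 / (real n + 1)) \<longlonglongrightarrow> 1 + 0"
        by (intro tendsto_add tendsto_const) real_asymp
      ultimately show "(\<lambda>n::nat. (real n + 2) / (real n + 1)) \<longlonglongrightarrow> 1" by simp
    qed
    then have "eventually (\<lambda>n. ((real n + 2) / (real n + 1)) * q < (1+q)/2) sequentially"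
      using q by (intro order_tendstoD) auto
    then obtain N where h: "((real N + 2) / (real N + 1)) * q < (1+q)/2"
      by (auto simp: eventually_sequentially)
    have "(real N + 2) * q = (((real N + 2) / (real N + 1)) * q) * (real N + 1)" by (simp add: field_simps)
    also have "\<dots> \<le> ((1+q)/2) * (real N + 1)" using h by (intro mult_right_mono) auto
    finally show ?thesis using that by blast
  qed
  show ?thesis
  proof (rule summable_ratio_test[of "(1+q)/2" N])
    show "(1+q)/2 < 1" using q by simp
    fix n assume "N \<le> n"
    have "(real n + 2) * q \<le> ((1+q)/2) * (real n + 1)"
    proof -
      have e1: "(real n + 2) * q = q * (real n + 1) + q" by (simp add: algebra_simps)
      have e2: "(real N + 2) * q = q * (real N + 1) + q" by (simp add: algebra_simps)
      have e3: "((1+q)/2) * (real n + 1) = ((1+q)/2 - q) * (real n + 1) + q * (real n + 1)" by (simp add: field_simps)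
      have e4: "((1+q)/2) * (real N + 1) = ((1+q)/2 - q) * (real N + 1) + q * (real N + 1)" by (simp add: field_simps)
      have "((1+q)/2 - q) * (real N + 1) \<le> ((1+q)/2 - q) * (real n + 1)"
        using \<open>N \<le> n\<close> q by (intro mult_left_mono) auto
      then show ?thesis using N e1 e2 e3 e4 by (smt (verit))
    qed
    then have "(real n + 2) * q * q^n \<le> ((1+q)/2) * (real n + 1) * q^n"
      using q by (intro mult_right_mono) auto
    moreover have "norm ((real (Suc n) + 1) * q ^ Suc n) = (real n + 2) * q * q^n"
      using q by (simp add: abs_mult)
    moreover have "(1+q)/2 * norm ((real n + 1) * q ^ n) = ((1+q)/2) * (real n + 1) * q^n"
      using q by (simp add: abs_mult)
    ultimately show "norm ((real (Suc n) + 1) * q ^ Suc n) \<le> (1+q)/2 * norm ((real n + 1) * q ^ n)"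
      by (simp only:)
  qed
qed

lemma integrable_cube_bound:
  assumes g: "g \<in> borel_measurable lborel" and g0: "\<And>z. 0 \<le> g z"
    and b: "\<And>z. ennreal (g z) \<le> (\<Sum>k. ennreal (a k) * indicator (cube (r k)) z)"
    and a: "\<And>k. 0 \<le> a k" and r: "\<And>k. 0 \<le> r k" and s: "summable (\<lambda>k. a k * (2 * r k)^2)"
  shows "integrable lborel g"
proof (rule integrableI_bounded[OF g])
  have "(\<integral>\<^sup>+z. ennreal (norm (g z)) \<partial>lborel) = (\<integral>\<^sup>+z. ennreal (g z) \<partial>lborel)"
    using g0 by simp
  also have "\<dots> < \<infinity>" by (rule nn_integral_cube_bound[OF g b a r s])
  finally show "(\<integral>\<^sup>+z. ennreal (norm (g z)) \<partial>lborel) < \<infinity>" .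
qed

lemma phi_integrable: "integrable lborel phi"
proof (rule integrable_cube_bound[where a = "\<lambda>k. (real k + 1) * ln 2" and r = "\<lambda>k. (1/2)^k"])
  show "phi \<in> borel_measurable lborel" by measurable
  show "0 \<le> phi z" for z by (rule phi_ge)
  show "0 \<le> (real k + 1) * ln 2" for k by simp
  show "0 \<le> ((1::real)/2)^k" for k by simp
  have "summable (\<lambda>k. (4 * ln 2) * ((real k + 1) * (1/4::real)^k))"
    by (intro summable_mult summable_lin_geom) auto
  moreover have "(\<lambda>k. (real k + 1) * ln 2 * (2 * (1/2::real)^k)^2) = (\<lambda>k. (4 * ln 2) * ((real k + 1) * (1/4::real)^k))"
  proof (rule ext)
    fix k :: nat
    have "(2 * (1/2::real)^k)^2 = 4 * ((1/2)^2)^k" by (simp add: power_mult_distrib power_mult[symmetric] mult.commute)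
    then show "(real k + 1) * ln 2 * (2 * (1/2::real)^k)^2 = (4 * ln 2) * ((real k + 1) * (1/4::real)^k)" by (simp add: power2_eq_square)
  qed
  ultimately show "summable (\<lambda>k. (real k + 1) * ln 2 * (2 * (1/2::real)^k)^2)" by (simp only:)
  fix z :: pt
  show "ennreal (phi z) \<le> (\<Sum>k. ennreal ((real k + 1) * ln 2) * indicator (cube ((1/2)^k)) z)"
  proof (cases "z = 0 \<or> 1 \<le> norm z")
    case True
    then have "phi z = 0" unfolding phi_def by auto
    then show ?thesis by simp
  next
    case False
    then have z: "0 < norm z" "norm z < 1" by auto
    define l where "l = - log 2 (norm z)"
    have l0: "0 < l" using z unfolding l_def by simp
    define k where "k = nat \<lfloor>l\<rfloor>"
    have kl: "real k \<le> l" "l < real k + 1" unfolding k_def using l0 by linarith+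
    have "norm z = 2 powr (- l)" unfolding l_def using z by simp
    also have "\<dots> \<le> 2 powr (- real k)" using kl by (intro powr_mono) auto
    also have "\<dots> = (1/2)^k" by (simp add: powr_minus powr_realpow power_divide inverse_eq_divide)
    finally have zin: "z \<in> cube ((1/2)^k)" by (rule mem_cube)
    have "- ln (norm z) = l * ln 2" unfolding l_def log_def by simp
    also have "\<dots> \<le> (real k + 1) * ln 2" using kl by (intro mult_right_mono) auto
    finally have "phi z \<le> (real k + 1) * ln 2" unfolding phi_def by simp
    then have "ennreal (phi z) \<le> ennreal ((real k + 1) * ln 2) * indicator (cube ((1/2)^k)) z"
      using zin by (simp add: ennreal_leI)
    also have "\<dots> \<le> (\<Sum>k. ennreal ((real k + 1) * ln 2) * indicator (cube ((1/2)^k)) z)"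
      by (rule ennreal_le_suminf)
    finally show ?thesis .
  qed
qed

lemma gauss_integrable: "0 < c \<Longrightarrow> integrable lborel (\<lambda>w::pt. exp (- c * norm w ^ 2))"
proof (rule integrable_cube_bound[where a = "\<lambda>k. exp (- real k)" and r = "\<lambda>k. sqrt ((real k + 1) / c)"])
  assume c: "0 < c"
  show "(\<lambda>w::pt. exp (- c * norm w ^ 2)) \<in> borel_measurable lborel" by measurable
  show "0 \<le> exp (- c * norm w ^ 2)" for w :: pt by simp
  show "0 \<le> exp (- real k)" for k by simp
  show "0 \<le> sqrt ((real k + 1) / c)" for k using c by simp
  have "summable (\<lambda>k. (4 / c) * ((real k + 1) * (exp (-1))^k))"
    by (intro summable_mult summable_lin_geom) auto
  moreover have "(\<lambda>k. exp (- real k) * (2 * sqrt ((real k + 1) / c))^2) = (\<lambda>k. (4 / c) * ((real k + 1) * (exp (-1))^k))"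
  proof (rule ext)
    fix k :: nat
    have "exp (- real k) = (exp (-1))^k" by (simp add: exp_of_nat_mult[symmetric])
    moreover have "(2 * sqrt ((real k + 1) / c))^2 = 4 * ((real k + 1) / c)"
      using c by (simp add: power_mult_distrib)
    ultimately show "exp (- real k) * (2 * sqrt ((real k + 1) / c))^2 = (4 / c) * ((real k + 1) * (exp (-1))^k)" by simp
  qed
  ultimately show "summable (\<lambda>k. exp (- real k) * (2 * sqrt ((real k + 1) / c))^2)" by (simp only:)
  fix w :: pt
  define k where "k = nat \<lfloor>c * norm w ^ 2\<rfloor>"
  have x0: "0 \<le> c * norm w ^ 2" using c by simp
  have kl: "real k \<le> c * norm w ^ 2" "c * norm w ^ 2 < real k + 1" unfolding k_def using x0 by linarith+
  have "norm w ^ 2 \<le> (real k + 1) / c" using kl c by (simp add: field_simps)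
  then have "norm w \<le> sqrt ((real k + 1) / c)" by (simp add: real_le_rsqrt)
  then have win: "w \<in> cube (sqrt ((real k + 1) / c))" by (rule mem_cube)
  have "exp (- c * norm w ^ 2) \<le> exp (- real k)" using kl by simp
  then have "ennreal (exp (- c * norm w ^ 2)) \<le> ennreal (exp (- real k)) * indicator (cube (sqrt ((real k + 1) / c))) w"
    using win by (simp add: ennreal_leI)
  also have "\<dots> \<le> (\<Sum>k. ennreal (exp (- real k)) * indicator (cube (sqrt ((real k + 1) / c))) w)"
    by (rule ennreal_le_suminf)
  finally show "ennreal (exp (- c * norm w ^ 2)) \<le> (\<Sum>k. ennreal (exp (- real k)) * indicator (cube (sqrt ((real k + 1) / c))) w)" .
qed

abbreviation PP :: "(pt \<times> pt) measure" where "PP \<equiv> lborel \<Otimes>\<^sub>M lborel"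

lemma translate_nn: "g \<in> borel_measurable borel \<Longrightarrow> (\<integral>\<^sup>+y. g (c + y) \<partial>lborel) = (\<integral>\<^sup>+y. g (y::pt) \<partial>lborel)"
proof -
  assume g: "g \<in> borel_measurable borel"
  have "(\<integral>\<^sup>+y. g y \<partial>lborel) = (\<integral>\<^sup>+y. g y \<partial>distr lborel borel ((+) c))" by (simp add: lborel_distr_plus)
  also have "\<dots> = (\<integral>\<^sup>+y. g (c + y) \<partial>lborel)" using g by (intro nn_integral_distr) auto
  finally show ?thesis by simp
qed

lemma translate_integrable: "g \<in> borel_measurable borel \<Longrightarrow> integrable lborel (\<lambda>y. g (c + y)) = integrable lborel (g :: pt \<Rightarrow> real)"
proof -
  assume g: "g \<in> borel_measurable borel"
  have "integrable lborel g = integrable (distr lborel borel ((+) c)) g" by (simp add: lborel_distr_plus)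
  also have "\<dots> = integrable lborel (\<lambda>y. g (c + y))" using g by (intro integrable_distr_eq) auto
  finally show ?thesis by simp
qed

lemma translate_integral: "g \<in> borel_measurable borel \<Longrightarrow> (\<integral>y. g (c + y) \<partial>lborel) = (\<integral>y. (g :: pt \<Rightarrow> real) y \<partial>lborel)"
proof -
  assume g: "g \<in> borel_measurable borel"
  have "(\<integral>y. g y \<partial>lborel) = (\<integral>y. g y \<partial>distr lborel borel ((+) c))" by (simp add: lborel_distr_plus)
  also have "\<dots> = (\<integral>y. g (c + y) \<partial>lborel)" using g by (intro integral_distr) auto
  finally show ?thesis by simp
qed

lemma phi_shift_integrable: "integrable lborel (\<lambda>y. phi (x - y))"
proof -
  have "integrable lborel (\<lambda>y. phi ((-x) + y))"
    using phi_integrable by (subst translate_integrable) auto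
  moreover have "phi ((-x) + y) = phi (x - y)" for y
    unfolding phi_def by (simp add: norm_minus_commute)
  ultimately show ?thesis by simp
qed

lemma nn_phi_shift: "(\<integral>\<^sup>+y. ennreal (phi (x - y)) \<partial>lborel) = (\<integral>\<^sup>+y. ennreal (phi y) \<partial>lborel)"
proof -
  have "(\<integral>\<^sup>+y. ennreal (phi ((-x) + y)) \<partial>lborel) = (\<integral>\<^sup>+y. ennreal (phi y) \<partial>lborel)"
    by (rule translate_nn) measurable
  moreover have "phi ((-x) + y) = phi (x - y)" for y
    unfolding phi_def by (simp add: norm_minus_commute)
  ultimately show ?thesis by simp
qed

lemma nn_norm_finite: "integrable M (f :: 'a \<Rightarrow> real) \<Longrightarrow> (\<integral>\<^sup>+x. ennreal (norm (f x)) \<partial>M) < \<infinity>"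
  using integrable_iff_bounded by blast

lemma integrable_prod_mult:
  fixes a b :: "pt \<Rightarrow> real"
  assumes a: "integrable lborel a" and b: "integrable lborel b"
  shows "integrable PP (\<lambda>p. a (fst p) * b (snd p))"
    and "(\<integral>p. a (fst p) * b (snd p) \<partial>PP) = (\<integral>x. a x \<partial>lborel) * (\<integral>y. b y \<partial>lborel)"
proof -
  have am[measurable]: "a \<in> borel_measurable borel" and bm[measurable]: "b \<in> borel_measurable borel"
    using a b by auto
  show int: "integrable PP (\<lambda>p. a (fst p) * b (snd p))"
  proof (rule integrableI_bounded)
    show "(\<lambda>p. a (fst p) * b (snd p)) \<in> borel_measurable PP" by measurable
    have "(\<integral>\<^sup>+p. ennreal (norm (a (fst p) * b (snd p))) \<partial>PP)
        = (\<integral>\<^sup>+x. \<integral>\<^sup>+y. ennreal (norm (a x)) * ennreal (norm (b y)) \<partial>lborel \<partial>lborel)"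
      by (subst lborel.nn_integral_fst[symmetric]) (auto simp: abs_mult ennreal_mult)
    also have "\<dots> = (\<integral>\<^sup>+x. ennreal (norm (a x)) * (\<integral>\<^sup>+y. ennreal (norm (b y)) \<partial>lborel) \<partial>lborel)"
      by (subst nn_integral_cmult) auto
    also have "\<dots> = (\<integral>\<^sup>+x. ennreal (norm (a x)) \<partial>lborel) * (\<integral>\<^sup>+y. ennreal (norm (b y)) \<partial>lborel)"
      by (subst nn_integral_multc) auto
    also have "\<dots> < \<infinity>" using nn_norm_finite[OF a] nn_norm_finite[OF b]
      by (simp add: ennreal_mult_less_top)
    finally show "(\<integral>\<^sup>+p. ennreal (norm (a (fst p) * b (snd p))) \<partial>PP) < \<infinity>" .
  qed
  have "(\<integral>p. a (fst p) * b (snd p) \<partial>PP) = (\<integral>x. \<integral>y. a x * b y \<partial>lborel \<partial>lborel)"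
    using lborel_pair.integral_fst'[OF int] by simp
  also have "\<dots> = (\<integral>x. a x * (\<integral>y. b y \<partial>lborel) \<partial>lborel)" by simp
  also have "\<dots> = (\<integral>x. a x \<partial>lborel) * (\<integral>y. b y \<partial>lborel)" by simp
  finally show "(\<integral>p. a (fst p) * b (snd p) \<partial>PP) = (\<integral>x. a x \<partial>lborel) * (\<integral>y. b y \<partial>lborel)" .
qed

lemma integrable_phi_pair:
  fixes a :: "pt \<Rightarrow> real"
  assumes a: "integrable lborel a"
  shows "integrable PP (\<lambda>p. a (fst p) * phi (fst p - snd p))"
proof (rule integrableI_bounded)
  have am[measurable]: "a \<in> borel_measurable borel" using a by auto
  show "(\<lambda>p. a (fst p) * phi (fst p - snd p)) \<in> borel_measurable PP" by measurable
  have "(\<integral>\<^sup>+p. ennreal (norm (a (fst p) * phi (fst p - snd p))) \<partial>PP)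
      = (\<integral>\<^sup>+x. \<integral>\<^sup>+y. ennreal (norm (a x)) * ennreal (phi (x - y)) \<partial>lborel \<partial>lborel)"
    by (subst lborel.nn_integral_fst[symmetric]) (auto simp: abs_mult ennreal_mult phi_ge)
  also have "\<dots> = (\<integral>\<^sup>+x. ennreal (norm (a x)) * (\<integral>\<^sup>+y. ennreal (phi (x - y)) \<partial>lborel) \<partial>lborel)"
    by (subst nn_integral_cmult) auto
  also have "\<dots> = (\<integral>\<^sup>+x. ennreal (norm (a x)) * (\<integral>\<^sup>+y. ennreal (phi y) \<partial>lborel) \<partial>lborel)"
    by (simp add: nn_phi_shift)
  also have "\<dots> = (\<integral>\<^sup>+x. ennreal (norm (a x)) \<partial>lborel) * (\<integral>\<^sup>+y. ennreal (phi y) \<partial>lborel)"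
    by (subst nn_integral_multc) auto
  also have "\<dots> < \<infinity>" using nn_norm_finite[OF a] nn_norm_finite[OF phi_integrable]
    by (simp add: ennreal_mult_less_top phi_ge)
  finally show "(\<integral>\<^sup>+p. ennreal (norm (a (fst p) * phi (fst p - snd p)))  \<partial>PP) < \<infinity>" .
qed

definition good :: "(pt \<Rightarrow> real) \<Rightarrow> bool" where
  "good a \<longleftrightarrow> a \<in> borel_measurable borel \<and> (\<exists>B. \<forall>x. \<bar>a x\<bar> \<le> B) \<and> integrable lborel (\<lambda>x. a x * Lg x)"

lemma good_meas: "good a \<Longrightarrow> a \<in> borel_measurable borel" unfolding good_def by auto

lemma good_int: assumes "good a" shows "integrable lborel a"
proof -
  have am[measurable]: "a \<in> borel_measurable borel" using assms by (simp add: good_def)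
  have "integrable lborel (\<lambda>x. a x * Lg x / ln 2)" using assms unfolding good_def by auto
  then show ?thesis
  proof (rule Bochner_Integration.integrable_bound)
    show "a \<in> borel_measurable lborel" by simp
    show "AE x in lborel. norm (a x) \<le> norm (a x * Lg x / ln 2)"
    proof (intro AE_I2)
      fix x
      have "\<bar>a x\<bar> * ln 2 \<le> \<bar>a x\<bar> * Lg x" using Lg_ge(1)[of x] by (intro mult_left_mono) auto
      then show "norm (a x) \<le> norm (a x * Lg x / ln 2)"
        using Lg_ge(2)[of x] by (simp add: abs_mult field_simps)
    qed
  qed
qed

lemma good_lin: assumes "good u" "good v" shows "good (\<lambda>x. \<alpha> * u x + \<beta> * v x)"
proof -
  obtain B1 where B1: "\<And>x. \<bar>u x\<bar> \<le> B1" using assms(1) unfolding good_def by auto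
  obtain B2 where B2: "\<And>x. \<bar>v x\<bar> \<le> B2" using assms(2) unfolding good_def by auto
  have "\<bar>\<alpha> * u x + \<beta> * v x\<bar> \<le> \<bar>\<alpha>\<bar> * B1 + \<bar>\<beta>\<bar> * B2" for x
  proof -
    have "\<bar>\<alpha> * u x + \<beta> * v x\<bar> \<le> \<bar>\<alpha>\<bar> * \<bar>u x\<bar> + \<bar>\<beta>\<bar> * \<bar>v x\<bar>" by (simp add: abs_mult abs_triangle_ineq[THEN order_trans])
    also have "\<dots> \<le> \<bar>\<alpha>\<bar> * B1 + \<bar>\<beta>\<bar> * B2" using B1[of x] B2[of x] by (intro add_mono mult_left_mono) auto
    finally show ?thesis .
  qed
  moreover have "integrable lborel (\<lambda>x. (\<alpha> * u x + \<beta> * v x) * Lg x)"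
  proof -
    have "integrable lborel (\<lambda>x. \<alpha> * (u x * Lg x) + \<beta> * (v x * Lg x))"
      using assms unfolding good_def by auto
    then show ?thesis by (simp add: algebra_simps)
  qed
  ultimately show ?thesis using assms unfolding good_def by auto
qed

lemma integrable_log_inner:
  assumes "good b" shows "integrable lborel (\<lambda>y. ln (norm (x - y)) * b y)"
proof -
  have bm[measurable]: "b \<in> borel_measurable borel" using assms by (simp add: good_def)
  obtain B where B: "\<And>x. \<bar>b x\<bar> \<le> B" using assms unfolding good_def by auto
  have B0: "0 \<le> B" using B[of 0] by simp
  have bi: "integrable lborel b" by (rule good_int[OF assms])
  have bL: "integrable lborel (\<lambda>y. b y * Lg y)" using assms by (simp add: good_def)
  have "integrable lborel (\<lambda>y. B * phi (x - y) + Lg x * \<bar>b y\<bar> + \<bar>b y * Lg y\<bar>)"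
    using phi_shift_integrable bi bL by auto
  then show ?thesis
  proof (rule Bochner_Integration.integrable_bound)
    show "(\<lambda>y. ln (norm (x - y)) * b y) \<in> borel_measurable lborel" by measurable
    show "AE y in lborel. norm (ln (norm (x - y)) * b y) \<le> norm (B * phi (x - y) + Lg x * \<bar>b y\<bar> + \<bar>b y * Lg y\<bar>)"
    proof (intro AE_I2)
      fix y
      have "norm (ln (norm (x - y)) * b y) = \<bar>ln (norm (x - y))\<bar> * \<bar>b y\<bar>" by (simp add: abs_mult)
      also have "\<dots> \<le> (phi (x - y) + Lg x + Lg y) * \<bar>b y\<bar>" using log_bound by (intro mult_right_mono) auto
      also have "\<dots> = phi (x - y) * \<bar>b y\<bar> + Lg x * \<bar>b y\<bar> + \<bar>b y * Lg y\<bar>"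
        using Lg_ge(2)[of y] by (simp add: algebra_simps abs_mult)
      also have "\<dots> \<le> B * phi (x - y) + Lg x * \<bar>b y\<bar> + \<bar>b y * Lg y\<bar>"
        using B[of y] phi_ge[of "x-y"] by (metis add_le_cancel_right mult.commute mult_right_mono)
      also have "\<dots> \<le> norm (B * phi (x - y) + Lg x * \<bar>b y\<bar> + \<bar>b y * Lg y\<bar>)" by simp
      finally show "norm (ln (norm (x - y)) * b y) \<le> norm (B * phi (x - y) + Lg x * \<bar>b y\<bar> + \<bar>b y * Lg y\<bar>)" .
    qed
  qed
qed

lemma integrable_log_joint:
  assumes a: "good a" and b: "good b"
  shows "integrable PP (\<lambda>p. a (fst p) * ln (norm (fst p - snd p)) * b (snd p))"
proof -
  have am[measurable]: "a \<in> borel_measurable borel" using a by (simp add: good_def)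
  have bm[measurable]: "b \<in> borel_measurable borel" using b by (simp add: good_def)
  obtain B where B: "\<And>x. \<bar>b x\<bar> \<le> B" using b unfolding good_def by auto
  have B0: "0 \<le> B" using B[of 0] by simp
  have ai: "integrable lborel a" by (rule good_int[OF a])
  have bi: "integrable lborel b" by (rule good_int[OF b])
  have aL: "integrable lborel (\<lambda>y. a y * Lg y)" using a by (simp add: good_def)
  have bL: "integrable lborel (\<lambda>y. b y * Lg y)" using b by (simp add: good_def)
  have i1: "integrable PP (\<lambda>p. (B * \<bar>a (fst p)\<bar>) * phi (fst p - snd p))"
    by (rule integrable_phi_pair) (use ai in auto)
  have i2: "integrable PP (\<lambda>p. \<bar>a (fst p) * Lg (fst p)\<bar> * \<bar>b (snd p)\<bar>)"
    by (rule integrable_prod_mult) (use aL bi in auto)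
  have i3: "integrable PP (\<lambda>p. \<bar>a (fst p)\<bar> * \<bar>b (snd p) * Lg (snd p)\<bar>)"
    by (rule integrable_prod_mult) (use ai bL in auto)
  have "integrable PP (\<lambda>p. (B * \<bar>a (fst p)\<bar>) * phi (fst p - snd p) + \<bar>a (fst p) * Lg (fst p)\<bar> * \<bar>b (snd p)\<bar>
      + \<bar>a (fst p)\<bar> * \<bar>b (snd p) * Lg (snd p)\<bar>)"
    using i1 i2 i3 by auto
  then show ?thesis
  proof (rule Bochner_Integration.integrable_bound)
    show "(\<lambda>p. a (fst p) * ln (norm (fst p - snd p)) * b (snd p)) \<in> borel_measurable PP" by measurable
    show "AE p in PP. norm (a (fst p) * ln (norm (fst p - snd p)) * b (snd p))
       \<le> norm ((B * \<bar>a (fst p)\<bar>) * phi (fst p - snd p) + \<bar>a (fst p) * Lg (fst p)\<bar> * \<bar>b (snd p)\<bar>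
      + \<bar>a (fst p)\<bar> * \<bar>b (snd p) * Lg (snd p)\<bar>)"
    proof (intro AE_I2)
      fix p :: "pt \<times> pt"
      obtain x y where p: "p = (x, y)" by force
      have "norm (a x * ln (norm (x - y)) * b y) = \<bar>a x\<bar> * (\<bar>ln (norm (x - y))\<bar> * \<bar>b y\<bar>)" by (simp add: abs_mult)
      also have "\<dots> \<le> \<bar>a x\<bar> * ((phi (x - y) + Lg x + Lg y) * \<bar>b y\<bar>)" using log_bound
        by (intro mult_left_mono mult_right_mono) auto
      also have "\<dots> = \<bar>a x\<bar> * \<bar>b y\<bar> * phi (x - y) + \<bar>a x * Lg x\<bar> * \<bar>b y\<bar> + \<bar>a x\<bar> * \<bar>b y * Lg y\<bar>"
        using Lg_ge(2)[of y] Lg_ge(2)[of x] by (simp add: algebra_simps abs_mult)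
      also have "\<bar>a x\<bar> * \<bar>b y\<bar> * phi (x - y) \<le> (B * \<bar>a x\<bar>) * phi (x - y)"
      proof -
        have "\<bar>a x\<bar> * \<bar>b y\<bar> \<le> \<bar>a x\<bar> * B" using B[of y] by (intro mult_left_mono) auto
        then show ?thesis using phi_ge[of "x-y"] by (metis mult.commute mult_right_mono)
      qed
      finally have "norm (a x * ln (norm (x - y)) * b y) \<le> (B * \<bar>a x\<bar>) * phi (x - y) + \<bar>a x * Lg x\<bar> * \<bar>b y\<bar> + \<bar>a x\<bar> * \<bar>b y * Lg y\<bar>"
        by simp
      then show "norm (a (fst p) * ln (norm (fst p - snd p)) * b (snd p))
       \<le> norm ((B * \<bar>a (fst p)\<bar>) * phi (fst p - snd p) + \<bar>a (fst p) * Lg (fst p)\<bar> * \<bar>b (snd p)\<bar>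
      + \<bar>a (fst p)\<bar> * \<bar>b (snd p) * Lg (snd p)\<bar>)" unfolding p by (simp del: abs_mult) (smt (verit))
    qed
  qed
qed

definition J :: "(pt \<Rightarrow> real) \<Rightarrow> (pt \<Rightarrow> real) \<Rightarrow> real" where
  "J a b = (\<integral>p. a (fst p) * ln (norm (fst p - snd p)) * b (snd p) \<partial>PP)"

definition Bf :: "(pt \<Rightarrow> real) \<Rightarrow> (pt \<Rightarrow> real) \<Rightarrow> real" where
  "Bf a b = (\<integral>x. a x * (\<integral>y. ln (norm (x - y)) * b y \<partial>lborel) \<partial>lborel)"

lemma Bf_J: assumes "good a" "good b" shows "Bf a b = J a b"
proof -
  have "J a b = (\<integral>x. \<integral>y. a x * ln (norm (x - y)) * b y \<partial>lborel \<partial>lborel)"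
    unfolding J_def using lborel_pair.integral_fst'[OF integrable_log_joint[OF assms]] by simp
  also have "\<dots> = Bf a b" unfolding Bf_def
  proof (rule Bochner_Integration.integral_cong[OF refl])
    fix x
    have "(\<integral>y. a x * ln (norm (x - y)) * b y \<partial>lborel) = (\<integral>y. a x * (ln (norm (x - y)) * b y) \<partial>lborel)"
      by (simp add: mult.assoc)
    also have "\<dots> = a x * (\<integral>y. ln (norm (x - y)) * b y \<partial>lborel)" by (rule integral_mult_right_zero)
    finally show "(\<integral>y. a x * ln (norm (x - y)) * b y \<partial>lborel) = a x * (\<integral>y. ln (norm (x - y)) * b y \<partial>lborel)" .
  qed
  finally show ?thesis by simp
qed

lemma J_lin1: assumes "good u" "good v" "good w"
  shows "J (\<lambda>x. \<alpha> * u x + \<beta> * v x) w = \<alpha> * J u w + \<beta> * J v w"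
proof -
  have iu: "integrable PP (\<lambda>p. u (fst p) * ln (norm (fst p - snd p)) * w (snd p))"
    using integrable_log_joint assms by auto
  have iv: "integrable PP (\<lambda>p. v (fst p) * ln (norm (fst p - snd p)) * w (snd p))"
    using integrable_log_joint assms by auto
  have "J (\<lambda>x. \<alpha> * u x + \<beta> * v x) w = (\<integral>p. \<alpha> * (u (fst p) * ln (norm (fst p - snd p)) * w (snd p))
     + \<beta> * (v (fst p) * ln (norm (fst p - snd p)) * w (snd p)) \<partial>PP)"
    unfolding J_def by (rule Bochner_Integration.integral_cong[OF refl]) (simp add: algebra_simps)
  also have "\<dots> = \<alpha> * J u w + \<beta> * J v w"
    unfolding J_def using iu iv by simp
  finally show ?thesis .
qed

lemma J_lin2: assumes "good u" "good v" "good w"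
  shows "J w (\<lambda>x. \<alpha> * u x + \<beta> * v x) = \<alpha> * J w u + \<beta> * J w v"
proof -
  have iu: "integrable PP (\<lambda>p. w (fst p) * ln (norm (fst p - snd p)) * u (snd p))"
    using integrable_log_joint assms by auto
  have iv: "integrable PP (\<lambda>p. w (fst p) * ln (norm (fst p - snd p)) * v (snd p))"
    using integrable_log_joint assms by auto
  have "J w (\<lambda>x. \<alpha> * u x + \<beta> * v x) = (\<integral>p. \<alpha> * (w (fst p) * ln (norm (fst p - snd p)) * u (snd p))
     + \<beta> * (w (fst p) * ln (norm (fst p - snd p)) * v (snd p)) \<partial>PP)"
    unfolding J_def by (rule Bochner_Integration.integral_cong[OF refl]) (simp add: algebra_simps)
  also have "\<dots> = \<alpha> * J w u + \<beta> * J w v"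
    unfolding J_def using iu iv by simp
  finally show ?thesis .
qed

lemma J_convex_identity:
  assumes u: "good u" and v: "good v"
  shows "J (\<lambda>x. t * u x + (1 - t) * v x) (\<lambda>x. t * u x + (1 - t) * v x)
    = t * J u u + (1 - t) * J v v - t * (1 - t) * J (\<lambda>x. 1 * u x + (-1) * v x) (\<lambda>x. 1 * u x + (-1) * v x)"
proof -
  have s: "good (\<lambda>x. t * u x + (1 - t) * v x)" by (rule good_lin[OF u v])
  have d: "good (\<lambda>x. 1 * u x + (-1) * v x)" by (rule good_lin[OF u v])
  define S where "S = J (\<lambda>x. t * u x + (1 - t) * v x) (\<lambda>x. t * u x + (1 - t) * v x)"
  define D where "D = J (\<lambda>x. 1 * u x + (-1) * v x) (\<lambda>x. 1 * u x + (-1) * v x)"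
  have e1: "S = t * (t * J u u + (1-t) * J u v) + (1-t) * (t * J v u + (1-t) * J v v)"
    unfolding S_def by (simp only: J_lin1[OF u v s] J_lin2[OF u v u] J_lin2[OF u v v])
  have e2: "D = 1 * (1 * J u u + (-1) * J u v) + (-1) * (1 * J v u + (-1) * J v v)"
    unfolding D_def by (simp only: J_lin1[OF u v d] J_lin2[OF u v u] J_lin2[OF u v v])
  have "S = t * J u u + (1 - t) * J v v - t * (1 - t) * D" by (simp add: e1 e2 algebra_simps)
  then show ?thesis unfolding S_def D_def .
qed

definition fk :: "real \<Rightarrow> real \<Rightarrow> real" where
  "fk a t = indicator {0<..} t * ((exp (- (t * a)) - exp (- t)) / t)"


lemma exp_integral_Ioi:
  assumes u: "0 < u"
  shows "(\<integral>\<^sup>+t. ennreal (exp (- (t * u))) * indicator {0<..} t \<partial>lborel) = ennreal (1 / u)"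
proof -
  have "(\<integral>\<^sup>+t. ennreal (exp (- (t * u))) * indicator {0<..} t \<partial>lborel)
      = (\<integral>\<^sup>+t. ennreal (exp (- (t * u))) * indicator {0..} t \<partial>lborel)"
    by (intro nn_integral_cong_AE) (use AE_lborel_singleton[of 0] in \<open>auto elim!: eventually_mono simp: indicator_def\<close>)
  also have "\<dots> = ennreal (0 - (- exp (- (0 * u)) / u))"
  proof (rule nn_integral_FTC_atLeast)
    show "(\<lambda>t. exp (- (t * u))) \<in> borel_measurable borel" by measurable
    show "DERIV (\<lambda>t. - exp (- (t * u)) / u) x :> exp (- (x * u))" for x
      using u by (auto intro!: derivative_eq_intros)
    show "0 \<le> exp (- (x * u))" for x by simp
    show "((\<lambda>t. - exp (- (t * u)) / u) \<longlongrightarrow> 0) at_top"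
      using u by real_asymp
  qed
  finally show ?thesis by simp
qed

lemma frullani_nn:
  assumes p: "0 < p" and pq: "p \<le> q"
  shows "(\<integral>\<^sup>+t. ennreal (indicator {0<..} t * ((exp (- (t * p)) - exp (- (t * q))) / t)) \<partial>lborel) = ennreal (ln q - ln p)"
proof -
  have inner: "ennreal (indicator {0<..} t * ((exp (- (t * p)) - exp (- (t * q))) / t))
      = (\<integral>\<^sup>+u. ennreal (indicator {0<..} t * exp (- (t * u)) * indicator {p..q} u) \<partial>lborel)" for t
  proof (cases "0 < t")
    case True
    have "(\<integral>\<^sup>+u. ennreal (exp (- (t * u))) * indicator {p..q} u \<partial>lborel)
        = ennreal ((- exp (- (t * q)) / t) - (- exp (- (t * p)) / t))"
    proof (rule nn_integral_FTC_Icc)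
      show "(\<lambda>u. exp (- (t * u))) \<in> borel_measurable borel" by measurable
      show "DERIV (\<lambda>u. - exp (- (t * u)) / t) x :> exp (- (t * x))" for x
        using True by (auto intro!: derivative_eq_intros)
    qed (use pq in auto)
    moreover have "(- exp (- (t * q)) / t) - (- exp (- (t * p)) / t) = (exp (- (t * p)) - exp (- (t * q))) / t"
      by (simp add: diff_divide_distrib)
    moreover have "(\<integral>\<^sup>+u. ennreal (indicator {0<..} t * exp (- (t * u)) * indicator {p..q} u) \<partial>lborel)
        = (\<integral>\<^sup>+u. ennreal (exp (- (t * u))) * indicator {p..q} u \<partial>lborel)"
      using True by (intro nn_integral_cong) (simp split: split_indicator)
    ultimately show ?thesis using True by simp
  next
    case False
    then show ?thesis by (simp add: indicator_def)
  qed
  have "(\<integral>\<^sup>+t. ennreal (indicator {0<..} t * ((exp (- (t * p)) - exp (- (t * q))) / t)) \<partial>lborel)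
      = (\<integral>\<^sup>+t. \<integral>\<^sup>+u. ennreal (indicator {0<..} t * exp (- (t * u)) * indicator {p..q} u) \<partial>lborel \<partial>lborel)"
    by (simp only: inner)
  also have "\<dots> = (\<integral>\<^sup>+u. \<integral>\<^sup>+t. ennreal (indicator {0<..} t * exp (- (t * u)) * indicator {p..q} u) \<partial>lborel \<partial>lborel)"
    by (rule lborel_pair.Fubini'[symmetric]) measurable
  also have "\<dots> = (\<integral>\<^sup>+u. ennreal (1 / u) * indicator {p..q} u \<partial>lborel)"
  proof (rule nn_integral_cong)
    fix u :: real
    show "(\<integral>\<^sup>+t. ennreal (indicator {0<..} t * exp (- (t * u)) * indicator {p..q} u) \<partial>lborel) = ennreal (1 / u) * indicator {p..q} u"
    proof (cases "u \<in> {p..q}")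
      case True
      then have u: "0 < u" using p by auto
      have "(\<integral>\<^sup>+t. ennreal (indicator {0<..} t * exp (- (t * u)) * indicator {p..q} u) \<partial>lborel)
          = (\<integral>\<^sup>+t. ennreal (exp (- (t * u))) * indicator {0<..} t \<partial>lborel)"
        using True by (intro nn_integral_cong) (simp add: indicator_def)
      also have "\<dots> = ennreal (1 / u)" by (rule exp_integral_Ioi[OF u])
      finally show ?thesis using True by simp
    next
      case False
      then show ?thesis by simp
    qed
  qed
  also have "\<dots> = ennreal (ln q - ln p)"
  proof (rule nn_integral_FTC_Icc)
    show "(\<lambda>u::real. 1 / u) \<in> borel_measurable borel" by measurable
    show "DERIV ln x :> 1 / x" if "x \<in> {p..q}" for x using that p by (intro DERIV_ln_divide) auto
    show "0 \<le> 1 / x" if "x \<in> {p..q}" for x using that p by auto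
  qed (use pq in auto)
  finally show ?thesis .
qed

lemma frullani:
  assumes a: "0 < a"
  shows "integrable lborel (fk a)" "(\<integral>t. fk a t \<partial>lborel) = - ln a"
    "(\<integral>\<^sup>+t. ennreal \<bar>fk a t\<bar> \<partial>lborel) = ennreal \<bar>ln a\<bar>"
proof -
  have fm[measurable]: "fk a \<in> borel_measurable borel" unfolding fk_def by measurable
  have all: "integrable lborel (fk a) \<and> (\<integral>t. fk a t \<partial>lborel) = - ln a \<and> (\<integral>\<^sup>+t. ennreal \<bar>fk a t\<bar> \<partial>lborel) = ennreal \<bar>ln a\<bar>"
  proof (cases "a \<le> 1")
    case True
    have nn: "0 \<le> fk a t" for t
      using True unfolding fk_def by (auto simp: indicator_def intro!: divide_nonneg_pos mult_le_cancel_left1)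
    have eqf: "fk a t = indicator {0<..} t * ((exp (- (t * a)) - exp (- (t * 1))) / t)" for t
      unfolding fk_def by simp
    have N: "(\<integral>\<^sup>+t. ennreal (fk a t) \<partial>lborel) = ennreal (- ln a)"
      unfolding eqf using frullani_nn[OF a True] by simp
    have I: "integrable lborel (fk a)"
      by (rule integrableI_bounded) (use N nn in auto)
    moreover have "(\<integral>t. fk a t \<partial>lborel) = - ln a"
      using N nn True a by (subst integral_eq_nn_integral) auto
    moreover have "\<bar>ln a\<bar> = - ln a" using True a by simp
    ultimately show ?thesis using N nn by simp
  next
    case False
    have nn: "fk a t \<le> 0" for t
      using False unfolding fk_def by (auto simp: indicator_def intro!: divide_nonpos_pos)
    have eqf: "- fk a t = indicator {0<..} t * ((exp (- (t * 1)) - exp (- (t * a))) / t)" for t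
      unfolding fk_def by (cases "0 < t") (auto simp: field_simps)
    have N: "(\<integral>\<^sup>+t. ennreal (- fk a t) \<partial>lborel) = ennreal (ln a)"
      unfolding eqf using frullani_nn[of 1 a] False by simp
    have I: "integrable lborel (\<lambda>t. - fk a t)"
      by (rule integrableI_bounded) (use N nn in auto)
    then have I': "integrable lborel (fk a)" by simp
    have "(\<integral>t. - fk a t \<partial>lborel) = ln a"
      using N nn False by (subst integral_eq_nn_integral) auto
    then have "(\<integral>t. fk a t \<partial>lborel) = - ln a" by simp
    moreover have "\<bar>ln a\<bar> = ln a" using False by simp
    moreover have "\<bar>fk a t\<bar> = - fk a t" for t using nn[of t] by simp
    ultimately show ?thesis using N I' by simp
  qed
  then show "integrable lborel (fk a)" "(\<integral>t. fk a t \<partial>lborel) = - ln a"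
    "(\<integral>\<^sup>+t. ennreal \<bar>fk a t\<bar> \<partial>lborel) = ennreal \<bar>ln a\<bar>" by auto
qed

definition G :: "real \<Rightarrow> real" where "G c = (\<integral>w. exp (- c * norm (w::pt) ^ 2) \<partial>lborel)"

lemma G_pos: assumes c: "0 < c" shows "0 < G c"
proof -
  have i: "integrable lborel (\<lambda>w::pt. exp (- c * norm w ^ 2))" by (rule gauss_integrable[OF c])
  have "0 \<le> G c" unfolding G_def by (rule integral_nonneg_AE) auto
  moreover have "G c \<noteq> 0"
  proof
    assume "G c = 0"
    then have "AE w in lborel. exp (- c * norm (w::pt) ^ 2) = 0"
      unfolding G_def using integral_nonneg_eq_0_iff_AE[OF i] by auto
    then have "AE w in (lborel::pt measure). False" by simp
    then have "ae_filter (lborel::pt measure) = bot" using trivial_limit_def by blast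
    then show False by (simp add: ae_filter_eq_bot_iff)
  qed
  ultimately show ?thesis by simp
qed

lemma gauss_shift_integrable: "0 < c \<Longrightarrow> integrable lborel (\<lambda>z::pt. exp (- c * norm (z - m) ^ 2))"
proof -
  assume c: "0 < c"
  have "integrable lborel (\<lambda>z::pt. exp (- c * norm ((-m) + z) ^ 2))"
    using gauss_integrable[OF c] by (subst translate_integrable) auto
  then show ?thesis by simp
qed

lemma gauss_shift_integral: "(\<integral>z. exp (- c * norm (z - (m::pt)) ^ 2) \<partial>lborel) = G c"
proof -
  have "(\<integral>z. exp (- c * norm ((-m) + z) ^ 2) \<partial>lborel) = G c"
    unfolding G_def using translate_integral[of "\<lambda>w::pt. exp (- c * norm w ^ 2)" "-m"] by simp
  then show ?thesis by simp
qed

lemma gauss_split: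
  fixes x y z :: pt
  shows "2*t * norm (x - z)^2 + 2*t * norm (y - z)^2 = t * norm (x - y)^2 + 4*t * norm (z - (1/2) *\<^sub>R (x + y))^2"
  by (simp add: power2_norm_eq_inner inner_diff_left inner_diff_right inner_add_left inner_add_right algebra_simps inner_commute)

lemma gauss_conv:
  fixes x y :: pt assumes t: "0 < t"
  shows "(\<integral>z. exp (- (2*t) * norm (x - z)^2) * exp (- (2*t) * norm (y - z)^2) \<partial>lborel) = G (4*t) * exp (- t * norm (x - y)^2)"
proof -
  have "(\<integral>z. exp (- (2*t) * norm (x - z)^2) * exp (- (2*t) * norm (y - z)^2) \<partial>lborel)
     = (\<integral>z. exp (- t * norm (x - y)^2) * exp (- (4*t) * norm (z - (1/2) *\<^sub>R (x + y))^2) \<partial>lborel)"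
  proof (rule Bochner_Integration.integral_cong[OF refl])
    fix z
    have "- (2*t) * norm (x - z)^2 + - (2*t) * norm (y - z)^2 = - t * norm (x - y)^2 + - (4*t) * norm (z - (1/2) *\<^sub>R (x + y))^2"
      using gauss_split[of t x z y] by simp
    then show "exp (- (2*t) * norm (x - z)^2) * exp (- (2*t) * norm (y - z)^2) = exp (- t * norm (x - y)^2) * exp (- (4*t) * norm (z - (1/2) *\<^sub>R (x + y))^2)"
      by (simp add: exp_add[symmetric])
  qed
  also have "\<dots> = exp (- t * norm (x - y)^2) * G (4*t)"
    using gauss_shift_integral[of "4*t" "(1/2) *\<^sub>R (x+y)"] by simp
  finally show ?thesis by simp
qed

lemma sf_PP: "sigma_finite_measure PP"
  by (intro sigma_finite_pair_measure) (auto intro: lborel.sigma_finite_measure_axioms)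

interpretation T: pair_sigma_finite PP "lborel :: pt measure"
  by (intro pair_sigma_finite.intro sf_PP lborel.sigma_finite_measure_axioms)

interpretation Tr: pair_sigma_finite PP "lborel :: real measure"
  by (intro pair_sigma_finite.intro sf_PP lborel.sigma_finite_measure_axioms)

definition uf :: "(pt \<Rightarrow> real) \<Rightarrow> real \<Rightarrow> pt \<Rightarrow> real" where
  "uf f s z = (\<integral>x. f x * exp (- s * norm (x - z)^2) \<partial>lborel)"

definition Pq :: "(pt \<Rightarrow> real) \<Rightarrow> real \<Rightarrow> real" where
  "Pq f t = (\<integral>p. f (fst p) * f (snd p) * exp (- t * norm (fst p - snd p)^2) \<partial>PP)"

lemma integrable_f_gauss:
  assumes fi: "integrable lborel f" and s: "0 \<le> s"
  shows "integrable lborel (\<lambda>x. f x * exp (- s * norm (x - z)^2))"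
  using fi
proof (rule Bochner_Integration.integrable_bound)
  have [measurable]: "f \<in> borel_measurable borel" using fi by auto
  show "(\<lambda>x. f x * exp (- s * norm (x - z)^2)) \<in> borel_measurable lborel" by measurable
  show "AE x in lborel. norm (f x * exp (- s * norm (x - z)^2)) \<le> norm (f x)"
  proof (intro AE_I2)
    fix x
    have "exp (- s * norm (x - z)^2) \<le> 1" using s by simp
    then show "norm (f x * exp (- s * norm (x - z)^2)) \<le> norm (f x)"
      by (simp add: abs_mult mult_left_le)
  qed
qed

lemma P_rep:
  assumes fi: "integrable lborel f" and t: "0 < t"
  shows "integrable lborel (\<lambda>z. (uf f (2*t) z)^2)" "Pq f t = (\<integral>z. (uf f (2*t) z)^2 \<partial>lborel) / G (4*t)"
proof -
  have fm[measurable]: "f \<in> borel_measurable borel" using fi by auto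
  define H where "H = (\<lambda>(p::pt\<times>pt) (z::pt). (f (fst p) * exp (- (2*t) * norm (fst p - z)^2)) * (f (snd p) * exp (- (2*t) * norm (snd p - z)^2)))"
  have Hm[measurable]: "(\<lambda>q. H (fst q) (snd q)) \<in> borel_measurable (PP \<Otimes>\<^sub>M lborel)"
    unfolding H_def by measurable
  have Gp: "0 < G (4*t)" using G_pos t by simp
  have ee_int: "integrable lborel (\<lambda>z. exp (- (2*t) * norm (x - z)^2) * exp (- (2*t) * norm (y - z)^2))" for x y :: pt
    using gauss_shift_integrable[of "2*t" y]
  proof (rule Bochner_Integration.integrable_bound)
    show "(\<lambda>z. exp (- (2*t) * norm (x - z)^2) * exp (- (2*t) * norm (y - z)^2)) \<in> borel_measurable lborel" by measurable
    show "AE z in lborel. norm (exp (- (2*t) * norm (x - z)^2) * exp (- (2*t) * norm (y - z)^2)) \<le> norm (exp (- (2*t) * norm (z - y)^2))"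
    proof (intro AE_I2)
      fix z
      have "exp (- (2*t) * norm (x - z)^2) \<le> 1" using t by simp
      then show "norm (exp (- (2*t) * norm (x - z)^2) * exp (- (2*t) * norm (y - z)^2)) \<le> norm (exp (- (2*t) * norm (z - y)^2))"
        by (simp add: norm_minus_commute mult_left_le_one_le)
    qed
  qed (use t in auto)
  have inner_nn: "(\<integral>\<^sup>+z. ennreal (norm (H p z)) \<partial>lborel) = ennreal (\<bar>f (fst p)\<bar> * \<bar>f (snd p)\<bar> * (G (4*t) * exp (- t * norm (fst p - snd p)^2)))" for p
  proof -
    have "(\<integral>\<^sup>+z. ennreal (norm (H p z)) \<partial>lborel) = (\<integral>\<^sup>+z. ennreal (\<bar>f (fst p)\<bar> * \<bar>f (snd p)\<bar>) * ennreal (exp (- (2*t) * norm (fst p - z)^2) * exp (- (2*t) * norm (snd p - z)^2)) \<partial>lborel)"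
      unfolding H_def by (intro nn_integral_cong) (simp add: abs_mult ennreal_mult[symmetric] mult_ac)
    also have "\<dots> = ennreal (\<bar>f (fst p)\<bar> * \<bar>f (snd p)\<bar>) * (\<integral>\<^sup>+z. ennreal (exp (- (2*t) * norm (fst p - z)^2) * exp (- (2*t) * norm (snd p - z)^2)) \<partial>lborel)"
      by (rule nn_integral_cmult) measurable
    also have "(\<integral>\<^sup>+z. ennreal (exp (- (2*t) * norm (fst p - z)^2) * exp (- (2*t) * norm (snd p - z)^2)) \<partial>lborel)
        = ennreal (G (4*t) * exp (- t * norm (fst p - snd p)^2))"
      using nn_integral_eq_integral[OF ee_int[of "fst p" "snd p"]] gauss_conv[OF t, of "fst p" "snd p"] by simp
    finally show ?thesis using Gp by (subst ennreal_mult) auto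
  qed
  have Hint: "integrable (PP \<Otimes>\<^sub>M lborel) (\<lambda>q. H (fst q) (snd q))"
  proof (rule integrableI_bounded)
    show "(\<lambda>q. H (fst q) (snd q)) \<in> borel_measurable (PP \<Otimes>\<^sub>M lborel)" by simp
    have "(\<integral>\<^sup>+q. ennreal (norm (H (fst q) (snd q))) \<partial>(PP \<Otimes>\<^sub>M lborel)) = (\<integral>\<^sup>+p. \<integral>\<^sup>+z. ennreal (norm (H p z)) \<partial>lborel \<partial>PP)"
      using lborel.nn_integral_fst[of "\<lambda>q. ennreal (norm (H (fst q) (snd q)))" PP] by simp
    also have "\<dots> = (\<integral>\<^sup>+p. ennreal (\<bar>f (fst p)\<bar> * \<bar>f (snd p)\<bar> * (G (4*t) * exp (- t * norm (fst p - snd p)^2))) \<partial>PP)"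
      by (rule nn_integral_cong) (rule inner_nn)
    also have "\<dots> \<le> (\<integral>\<^sup>+p. ennreal (G (4*t) * (\<bar>f (fst p)\<bar> * \<bar>f (snd p)\<bar>)) \<partial>PP)"
    proof (intro nn_integral_mono ennreal_leI)
      fix p :: "pt \<times> pt"
      have "G (4*t) * exp (- t * norm (fst p - snd p)^2) \<le> G (4*t)" using Gp t by (simp add: mult_left_le)
      then show "\<bar>f (fst p)\<bar> * \<bar>f (snd p)\<bar> * (G (4*t) * exp (- t * norm (fst p - snd p)^2)) \<le> G (4*t) * (\<bar>f (fst p)\<bar> * \<bar>f (snd p)\<bar>)"
        by (metis abs_ge_zero mult.commute mult_left_mono zero_le_mult_iff)
    qed
    also have "\<dots> < \<infinity>"
    proof -
      have "integrable PP (\<lambda>p. (G (4*t) * \<bar>f (fst p)\<bar>) * \<bar>f (snd p)\<bar>)"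
        by (rule integrable_prod_mult) (use fi in auto)
      from nn_norm_finite[OF this] show ?thesis using Gp by (simp add: abs_mult mult_ac)
    qed
    finally show "(\<integral>\<^sup>+q. ennreal (norm (H (fst q) (snd q))) \<partial>(PP \<Otimes>\<^sub>M lborel)) < \<infinity>" .
  qed
  have Hint': "integrable (PP \<Otimes>\<^sub>M lborel) (case_prod H)"
    using Hint by (simp add: case_prod_beta')
  have snd_eq: "(\<integral>p. H p z \<partial>PP) = (uf f (2*t) z)^2" for z
  proof -
    have "(\<integral>p. H p z \<partial>PP) = (\<integral>x. f x * exp (- (2*t) * norm (x - z)^2) \<partial>lborel) * (\<integral>y. f y * exp (- (2*t) * norm (y - z)^2) \<partial>lborel)"
      unfolding H_def using integrable_prod_mult(2)[OF integrable_f_gauss[OF fi, of "2*t" z] integrable_f_gauss[OF fi, of "2*t" z]] t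
      by simp
    then show ?thesis unfolding uf_def by (simp add: power2_eq_square)
  qed
  have fst_eq: "(\<integral>z. H p z \<partial>lborel) = G (4*t) * (f (fst p) * f (snd p) * exp (- t * norm (fst p - snd p)^2))" for p
  proof -
    have "(\<integral>z. H p z \<partial>lborel) = (\<integral>z. (f (fst p) * f (snd p)) * (exp (- (2*t) * norm (fst p - z)^2) * exp (- (2*t) * norm (snd p - z)^2)) \<partial>lborel)"
      unfolding H_def by (rule Bochner_Integration.integral_cong[OF refl]) (simp add: mult_ac)
    also have "\<dots> = (f (fst p) * f (snd p)) * (G (4*t) * exp (- t * norm (fst p - snd p)^2))"
      using gauss_conv[OF t, of "fst p" "snd p"] by simp
    finally show ?thesis by (simp add: mult_ac)
  qed
  have I2: "integrable lborel (\<lambda>z. \<integral>p. H p z \<partial>PP)" by (rule T.integrable_snd[OF Hint'])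
  then show "integrable lborel (\<lambda>z. (uf f (2*t) z)^2)" by (simp add: snd_eq)
  have "(\<integral>z. (uf f (2*t) z)^2 \<partial>lborel) = (\<integral>z. \<integral>p. H p z \<partial>PP \<partial>lborel)" by (simp add: snd_eq)
  also have "\<dots> = (\<integral>p. \<integral>z. H p z \<partial>lborel \<partial>PP)" by (rule T.Fubini_integral[OF Hint'])
  also have "\<dots> = (\<integral>p. G (4*t) * (f (fst p) * f (snd p) * exp (- t * norm (fst p - snd p)^2)) \<partial>PP)"
    by (simp add: fst_eq)
  also have "\<dots> = G (4*t) * Pq f t" unfolding Pq_def by simp
  finally show "Pq f t = (\<integral>z. (uf f (2*t) z)^2 \<partial>lborel) / G (4*t)" using Gp by simp
qed

lemma AE_offdiag: "AE p in PP. fst p \<noteq> snd p"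
proof (rule lborel_pair.AE_pair_measure)
  show "{x \<in> space PP. fst x \<noteq> snd x} \<in> sets PP" by measurable
  show "AE x in lborel. AE y in lborel. fst (x, y) \<noteq> snd (x::pt, y::pt)"
  proof (rule AE_I2)
    fix x :: pt assume "x \<in> space lborel"
    show "AE y in lborel. fst (x, y) \<noteq> snd (x, y::pt)"
      using AE_lborel_singleton[of x] by (auto elim!: eventually_mono)
  qed
qed

lemma log_t_rep:
  assumes f: "good f" and f0: "(\<integral>x. f x \<partial>lborel) = 0"
  shows "integrable lborel (\<lambda>t. indicator {0<..} t * (Pq f t / t))"
    "(\<integral>t. indicator {0<..} t * (Pq f t / t) \<partial>lborel) = - 2 * J f f"
proof -
  have fi: "integrable lborel f" by (rule good_int[OF f])
  have fm[measurable]: "f \<in> borel_measurable borel" using f by (simp add: good_def)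
  define W where "W = (\<lambda>(p::pt\<times>pt) (t::real). f (fst p) * f (snd p) * fk (norm (fst p - snd p)^2) t)"
  have Wm[measurable]: "(\<lambda>q. W (fst q) (snd q)) \<in> borel_measurable (PP \<Otimes>\<^sub>M lborel)"
    unfolding W_def fk_def by measurable
  have Wm'[measurable]: "case_prod W \<in> borel_measurable (PP \<Otimes>\<^sub>M lborel)"
    using Wm by (simp add: case_prod_beta')
  have jl: "integrable PP (\<lambda>p. f (fst p) * ln (norm (fst p - snd p)) * f (snd p))"
    by (rule integrable_log_joint[OF f f])
  have lnsq: "ln (norm (x - y)^2) = 2 * ln (norm (x - y))" if "x \<noteq> y" for x y :: pt
    using that by (simp add: ln_realpow)
  have inner_nn: "(\<integral>\<^sup>+t. ennreal (norm (W p t)) \<partial>lborel) = ennreal (norm (2 * (f (fst p) * ln (norm (fst p - snd p)) * f (snd p))))"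
    if "fst p \<noteq> snd p" for p
  proof -
    have a: "0 < norm (fst p - snd p)^2" using that by simp
    have "(\<integral>\<^sup>+t. ennreal (norm (W p t)) \<partial>lborel) = (\<integral>\<^sup>+t. ennreal (\<bar>f (fst p) * f (snd p)\<bar>) * ennreal \<bar>fk (norm (fst p - snd p)^2) t\<bar> \<partial>lborel)"
      unfolding W_def by (intro nn_integral_cong) (simp add: abs_mult ennreal_mult)
    also have "\<dots> = ennreal (\<bar>f (fst p) * f (snd p)\<bar>) * (\<integral>\<^sup>+t. ennreal \<bar>fk (norm (fst p - snd p)^2) t\<bar> \<partial>lborel)"
      by (rule nn_integral_cmult) (unfold fk_def, measurable)
    also have "\<dots> = ennreal (\<bar>f (fst p) * f (snd p)\<bar>) * ennreal \<bar>ln (norm (fst p - snd p)^2)\<bar>"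
      by (simp add: frullani(3)[OF a])
    also have "\<dots> = ennreal (norm (2 * (f (fst p) * ln (norm (fst p - snd p)) * f (snd p))))"
      using lnsq[OF that] by (simp add: ennreal_mult[symmetric] abs_mult)
    finally show ?thesis .
  qed
  have Wint: "integrable (PP \<Otimes>\<^sub>M lborel) (\<lambda>q. W (fst q) (snd q))"
  proof (rule integrableI_bounded)
    show "(\<lambda>q. W (fst q) (snd q)) \<in> borel_measurable (PP \<Otimes>\<^sub>M lborel)" by simp
    have "(\<integral>\<^sup>+q. ennreal (norm (W (fst q) (snd q))) \<partial>(PP \<Otimes>\<^sub>M lborel)) = (\<integral>\<^sup>+p. \<integral>\<^sup>+t. ennreal (norm (W p t)) \<partial>lborel \<partial>PP)"
      using lborel.nn_integral_fst[of "\<lambda>q. ennreal (norm (W (fst q) (snd q)))" PP] by simp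
    also have "\<dots> = (\<integral>\<^sup>+p. ennreal (norm (2 * (f (fst p) * ln (norm (fst p - snd p)) * f (snd p)))) \<partial>PP)"
      by (rule nn_integral_cong_AE) (use AE_offdiag inner_nn in \<open>auto elim!: eventually_mono\<close>)
    also have "\<dots> < \<infinity>" by (rule nn_norm_finite) (use jl in auto)
    finally show "(\<integral>\<^sup>+q. ennreal (norm (W (fst q) (snd q))) \<partial>(PP \<Otimes>\<^sub>M lborel)) < \<infinity>" .
  qed
  have Wint': "integrable (PP \<Otimes>\<^sub>M lborel) (case_prod W)"
    using Wint by (simp add: case_prod_beta')
  have fst_int: "(\<integral>t. W p t \<partial>lborel) = - 2 * (f (fst p) * ln (norm (fst p - snd p)) * f (snd p))"
    if "fst p \<noteq> snd p" for p
  proof -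
    have a: "0 < norm (fst p - snd p)^2" using that by simp
    have "(\<integral>t. W p t \<partial>lborel) = f (fst p) * f (snd p) * (\<integral>t. fk (norm (fst p - snd p)^2) t \<partial>lborel)"
      unfolding W_def by (rule integral_mult_right_zero)
    also have "\<dots> = f (fst p) * f (snd p) * (- ln (norm (fst p - snd p)^2))" by (simp add: frullani(2)[OF a])
    finally show ?thesis using lnsq[OF that] by simp
  qed
  have snd_int: "(\<integral>p. W p t \<partial>PP) = indicator {0<..} t * (Pq f t / t)" for t
  proof (cases "0 < t")
    case False
    then show ?thesis unfolding W_def fk_def by simp
  next
    case True
    have e: "W p t = (1/t) * (f (fst p) * f (snd p) * exp (- t * norm (fst p - snd p)^2) - exp (- t) * (f (fst p) * f (snd p)))" for p
      unfolding W_def fk_def using True by (simp add: field_simps)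
    have i1: "integrable PP (\<lambda>p. f (fst p) * f (snd p))" by (rule integrable_prod_mult(1)[OF fi fi])
    have i2: "integrable PP (\<lambda>p. f (fst p) * f (snd p) * exp (- t * norm (fst p - snd p)^2))"
      using i1
    proof (rule Bochner_Integration.integrable_bound)
      show "(\<lambda>p. f (fst p) * f (snd p) * exp (- t * norm (fst p - snd p)^2)) \<in> borel_measurable PP" by measurable
      show "AE p in PP. norm (f (fst p) * f (snd p) * exp (- t * norm (fst p - snd p)^2)) \<le> norm (f (fst p) * f (snd p))"
      proof (rule AE_I2)
        fix p :: "pt \<times> pt"
        have "exp (- t * norm (fst p - snd p)^2) \<le> 1" using True by simp
        then show "norm (f (fst p) * f (snd p) * exp (- t * norm (fst p - snd p)^2)) \<le> norm (f (fst p) * f (snd p))"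
          by (simp add: abs_mult mult_left_le)
      qed
    qed
    have z: "(\<integral>p. f (fst p) * f (snd p) \<partial>PP) = 0" using integrable_prod_mult(2)[OF fi fi] f0 by simp
    have "(\<integral>p. W p t \<partial>PP) = (1/t) * ((\<integral>p. f (fst p) * f (snd p) * exp (- t * norm (fst p - snd p)^2) \<partial>PP) - exp (- t) * (\<integral>p. f (fst p) * f (snd p) \<partial>PP))"
      unfolding e using i1 i2 by simp
    also have "\<dots> = Pq f t / t" unfolding Pq_def z by simp
    finally show ?thesis using True by simp
  qed
  have "integrable lborel (\<lambda>t. \<integral>p. W p t \<partial>PP)" by (rule Tr.integrable_snd[OF Wint'])
  then show "integrable lborel (\<lambda>t. indicator {0<..} t * (Pq f t / t))" by (simp add: snd_int)
  have "(\<integral>t. indicator {0<..} t * (Pq f t / t) \<partial>lborel) = (\<integral>t. \<integral>p. W p t \<partial>PP \<partial>lborel)"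
    by (simp add: snd_int)
  also have "\<dots> = (\<integral>p. \<integral>t. W p t \<partial>lborel \<partial>PP)" by (rule Tr.Fubini_integral[OF Wint'])
  also have "\<dots> = (\<integral>p. - 2 * (f (fst p) * ln (norm (fst p - snd p)) * f (snd p)) \<partial>PP)"
  proof (rule integral_cong_AE)
    show "(\<lambda>p. \<integral>t. W p t \<partial>lborel) \<in> borel_measurable PP"
      by (rule lborel.borel_measurable_lebesgue_integral) (use Wm' in simp)
    show "(\<lambda>p. - 2 * (f (fst p) * ln (norm (fst p - snd p)) * f (snd p))) \<in> borel_measurable PP" by measurable
    show "AE p in PP. (\<integral>t. W p t \<partial>lborel) = - 2 * (f (fst p) * ln (norm (fst p - snd p)) * f (snd p))"
      using AE_offdiag by (auto elim!: eventually_mono simp: fst_int)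
  qed
  also have "\<dots> = - 2 * J f f" unfolding J_def by simp
  finally show "(\<integral>t. indicator {0<..} t * (Pq f t / t) \<partial>lborel) = - 2 * J f f" .
qed

lemma Pq_nonneg: assumes "integrable lborel f" "0 < t" shows "0 \<le> Pq f t"
proof -
  have "0 \<le> (\<integral>z. (uf f (2*t) z)^2 \<partial>lborel)" by (rule integral_nonneg_AE) auto
  then show ?thesis using P_rep[OF assms] G_pos[of "4*t"] assms(2) by simp
qed

lemma J_nonpos: assumes f: "good f" and f0: "(\<integral>x. f x \<partial>lborel) = 0" shows "J f f \<le> 0"
proof -
  have fi: "integrable lborel f" by (rule good_int[OF f])
  have "0 \<le> (\<integral>t. indicator {0<..} t * (Pq f t / t) \<partial>lborel)"
    by (rule integral_nonneg_AE) (auto intro!: AE_I2 divide_nonneg_pos Pq_nonneg[OF fi] simp: indicator_def)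
  then show ?thesis using log_t_rep(2)[OF f f0] by simp
qed

lemma J_zero:
  assumes f: "good f" and f0: "(\<integral>x. f x \<partial>lborel) = 0" and J0: "J f f = 0"
  shows "\<exists>s. real n \<le> s \<and> 0 < s \<and> (AE z in lborel. uf f s z = 0)"
proof -
  have fi: "integrable lborel f" by (rule good_int[OF f])
  define g where "g t = indicator {0<..} t * (Pq f t / t)" for t
  have gi: "integrable lborel g" unfolding g_def by (rule log_t_rep(1)[OF f f0])
  have g0: "AE t in lborel. 0 \<le> g t"
    unfolding g_def by (auto intro!: AE_I2 divide_nonneg_pos Pq_nonneg[OF fi] simp: indicator_def)
  have "(\<integral>t. g t \<partial>lborel) = 0" unfolding g_def using log_t_rep(2)[OF f f0] J0 by simp
  then have ae: "AE t in lborel. g t = 0" using integral_nonneg_eq_0_iff_AE[OF gi g0] by simp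
  have "\<exists>t\<in>{real n + 1 .. real n + 2}. g t = 0"
  proof (rule ccontr)
    assume "\<not> ?thesis"
    then have "AE t in lborel. t \<notin> {real n + 1 .. real n + 2}" using ae by (auto elim!: eventually_mono)
    then have "emeasure lborel {real n + 1 .. real n + 2} = 0"
      by (subst (asm) AE_iff_measurable[of "{real n + 1 .. real n + 2}"]) auto
    then show False by simp
  qed
  then obtain t where t: "real n + 1 \<le> t" "t \<le> real n + 2" "g t = 0" by auto
  have tp: "0 < t" using t by simp
  have "Pq f t = 0" using t tp unfolding g_def by simp
  then have "(\<integral>z. (uf f (2*t) z)^2 \<partial>lborel) = 0" using P_rep(2)[OF fi tp] G_pos[of "4*t"] tp by simp
  then have "AE z in lborel. (uf f (2*t) z)^2 = 0"
    using integral_nonneg_eq_0_iff_AE[OF P_rep(1)[OF fi tp]] by simp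
  then have "AE z in lborel. uf f (2*t) z = 0" by simp
  then show ?thesis using t by (intro exI[of _ "2*t"]) auto
qed

definition Tl :: "real \<Rightarrow> real \<Rightarrow> real" where
  "Tl s d = (\<integral>w. indicator {w::pt. d \<le> norm w} w * exp (- s * norm w ^ 2) \<partial>lborel) / G s"

lemma ind_gauss_integrable:
  assumes S: "S \<in> sets borel" and s: "0 < s"
  shows "integrable lborel (\<lambda>z::pt. indicator S z * exp (- s * norm (x - z)^2))"
  using gauss_shift_integrable[OF s, of x]
proof (rule Bochner_Integration.integrable_bound)
  show "(\<lambda>z::pt. indicator S z * exp (- s * norm (x - z)^2)) \<in> borel_measurable lborel" using S by measurable
  show "AE z in lborel. norm (indicator S z * exp (- s * norm (x - z)^2)) \<le> norm (exp (- s * norm (z - x)^2))"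
    by (intro AE_I2) (simp add: indicator_def norm_minus_commute)
qed

lemma cube_norm: "w \<in> cube r \<Longrightarrow> norm w \<le> 2 * r"
proof -
  assume w: "w \<in> cube r"
  have "norm w \<le> (\<Sum>b\<in>(Basis::pt set). \<bar>w \<bullet> b\<bar>)" by (rule norm_le_l1)
  also have "\<dots> \<le> (\<Sum>b\<in>(Basis::pt set). r)"
  proof (rule sum_mono)
    fix b :: pt assume b: "b \<in> Basis"
    then show "\<bar>w \<bullet> b\<bar> \<le> r" using w unfolding cube_def mem_box
      by (auto simp: inner_minus_left inner_sum_Basis)
  qed
  also have "\<dots> = 2 * r" by simp
  finally show ?thesis .
qed

lemma G_lower: assumes s: "0 < s" and r: "0 < r" shows "exp (- (4 * s * r^2)) * (2*r)^2 \<le> G s"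
proof -
  have cm: "measure lborel (cube r) = (2*r)^2" using emeasure_cube[of r] r by (simp add: measure_def)
  have "exp (- (4 * s * r^2)) * (2*r)^2 = (\<integral>w. indicator (cube r) w * exp (- (4 * s * r^2)) \<partial>lborel)"
    using cm emeasure_cube[of r] r by (simp add: cube_def[symmetric])
  also have "\<dots> \<le> (\<integral>w. exp (- s * norm (w::pt) ^ 2) \<partial>lborel)"
  proof (rule integral_mono)
    show "integrable lborel (\<lambda>w. indicator (cube r) w * exp (- (4 * s * r^2)))"
      using emeasure_cube[of r] r by (intro integrable_mult_left integrable_real_indicator) (auto simp: cube_def[symmetric])
    show "integrable lborel (\<lambda>w::pt. exp (- s * norm w ^ 2))" by (rule gauss_integrable[OF s])
    fix w :: pt
    show "indicator (cube r) w * exp (- (4 * s * r^2)) \<le> exp (- s * norm w ^ 2)"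
    proof (cases "w \<in> cube r")
      case True
      then have "norm w \<le> 2 * r" by (rule cube_norm)
      then have "norm w ^ 2 \<le> (2 * r)^2" by (intro power_mono) auto
      then have "s * norm w ^ 2 \<le> 4 * s * r^2" using s by (simp add: power_mult_distrib mult_left_mono)
      then show ?thesis using True by simp
    qed simp
  qed
  finally show ?thesis unfolding G_def .
qed

lemma Tl_bounds:
  assumes s: "1 \<le> s" and d: "0 < d"
  shows "0 \<le> Tl s d" "Tl s d \<le> (G 1 * exp (d^2) / (d^2 / 4)) * exp (- (3/4 * d^2) * s)"
proof -
  have s0: "0 < s" using s by simp
  have Gs: "0 < G s" by (rule G_pos[OF s0])
  have numi: "integrable lborel (\<lambda>w::pt. indicator {w. d \<le> norm w} w * exp (- s * norm w ^ 2))"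
    using ind_gauss_integrable[of "{w::pt. d \<le> norm w}" s 0] s0 by simp
  have num0: "0 \<le> (\<integral>w. indicator {w::pt. d \<le> norm w} w * exp (- s * norm w ^ 2) \<partial>lborel)"
    by (rule integral_nonneg_AE) auto
  then show "0 \<le> Tl s d" unfolding Tl_def using Gs by simp
  have "(\<integral>w. indicator {w::pt. d \<le> norm w} w * exp (- s * norm w ^ 2) \<partial>lborel)
      \<le> (\<integral>w. exp (- ((s - 1) * d^2)) * exp (- 1 * norm (w::pt) ^ 2) \<partial>lborel)"
  proof (rule integral_mono[OF numi])
    show "integrable lborel (\<lambda>w::pt. exp (- ((s - 1) * d^2)) * exp (- 1 * norm w ^ 2))"
      using gauss_integrable[of 1] by simp
    fix w :: pt
    show "indicator {w. d \<le> norm w} w * exp (- s * norm w ^ 2) \<le> exp (- ((s - 1) * d^2)) * exp (- 1 * norm w ^ 2)"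
    proof (cases "d \<le> norm w")
      case True
      then have "d^2 \<le> norm w ^ 2" using d by (intro power_mono) auto
      then have "(s - 1) * d^2 \<le> (s - 1) * norm w ^ 2" using s by (intro mult_left_mono) auto
      then have "- s * norm w ^ 2 \<le> - ((s - 1) * d^2) + - 1 * norm w ^ 2" by (simp add: algebra_simps)
      then have "exp (- s * norm w ^ 2) \<le> exp (- ((s - 1) * d^2) + - 1 * norm w ^ 2)" by (simp only: exp_le_cancel_iff)
      also have "\<dots> = exp (- ((s - 1) * d^2)) * exp (- 1 * norm w ^ 2)" by (rule exp_add)
      finally show ?thesis using True by simp
    qed simp
  qed
  also have "\<dots> = exp (- ((s - 1) * d^2)) * G 1" unfolding G_def by simp
  finally have num: "(\<integral>w. indicator {w::pt. d \<le> norm w} w * exp (- s * norm w ^ 2) \<partial>lborel) \<le> exp (- ((s - 1) * d^2)) * G 1" .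
  have gl: "exp (- (4 * s * (d/4)^2)) * (2*(d/4))^2 \<le> G s" using G_lower[OF s0, of "d/4"] d by simp
  have gl': "exp (- (s * d^2 / 4)) * (d^2 / 4) \<le> G s"
    using gl by (simp add: power_divide power_mult_distrib field_simps)
  have pos: "0 < exp (- (s * d^2 / 4)) * (d^2 / 4)" using d by simp
  have "Tl s d \<le> exp (- ((s - 1) * d^2)) * G 1 / (exp (- (s * d^2 / 4)) * (d^2 / 4))"
    unfolding Tl_def
  proof (rule frac_le)
    show "0 \<le> exp (- ((s - 1) * d^2)) * G 1" using G_pos[of 1] by simp
  qed (use num gl' pos in auto)
  also have "\<dots> = (G 1 * exp (d^2) / (d^2 / 4)) * exp (- (3/4 * d^2) * s)"
  proof -
    have "exp (- ((s - 1) * d^2)) = exp (d^2) * exp (- (s * d^2 / 4)) * exp (- (3/4 * d^2) * s)"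
      by (simp add: exp_add[symmetric] algebra_simps)
    then show ?thesis using d by (simp add: field_simps)
  qed
  finally show "Tl s d \<le> (G 1 * exp (d^2) / (d^2 / 4)) * exp (- (3/4 * d^2) * s)" .
qed

lemma Tl_lim: assumes d: "0 < d" shows "((\<lambda>s. Tl s d) \<longlongrightarrow> 0) at_top"
proof (rule tendsto_sandwich)
  show "eventually (\<lambda>s. 0 \<le> Tl s d) at_top"
    by (rule eventually_mono[OF eventually_ge_at_top[of 1]]) (rule Tl_bounds(1)[OF _ d])
  show "eventually (\<lambda>s. Tl s d \<le> (G 1 * exp (d^2) / (d^2 / 4)) * exp (- (3/4 * d^2) * s)) at_top"
    by (rule eventually_mono[OF eventually_ge_at_top[of 1]]) (rule Tl_bounds(2)[OF _ d])
  show "((\<lambda>s. 0) \<longlongrightarrow> (0::real)) at_top" by simp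
  have c: "0 < 3/4 * d^2" using d by simp
  have "((\<lambda>s. exp (- (3/4 * d^2) * s)) \<longlongrightarrow> 0) at_top"
  proof -
    have "filterlim (\<lambda>s. (3/4 * d^2) * s) at_top at_top"
      using c by (intro filterlim_tendsto_pos_mult_at_top[OF tendsto_const c filterlim_ident])
    then have "filterlim (\<lambda>s. - (3/4 * d^2) * s) at_bot at_top"
      by (simp add: filterlim_uminus_at_top)
    then show ?thesis by (rule filterlim_compose[OF exp_at_bot])
  qed
  then show "((\<lambda>s. (G 1 * exp (d^2) / (d^2 / 4)) * exp (- (3/4 * d^2) * s)) \<longlongrightarrow> 0) at_top"
    by (rule tendsto_mult_right_zero)
qed

definition Aq :: "pt set \<Rightarrow> real \<Rightarrow> pt \<Rightarrow> real" where
  "Aq B s x = (\<integral>z. indicator B z * exp (- s * norm (x - z)^2) \<partial>lborel) / G s"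

lemma gauss_full: "(\<integral>z. exp (- s * norm ((x::pt) - z)^2) \<partial>lborel) = G s"
  using gauss_shift_integral[of s x] by (simp add: norm_minus_commute)

lemma Tl_shift: assumes s: "0 < s" shows
  "(\<integral>z. indicator {z. d \<le> norm ((x::pt) - z)} z * exp (- s * norm (x - z)^2) \<partial>lborel) = Tl s d * G s"
proof -
  have "(\<integral>y. indicator {w::pt. d \<le> norm w} (-x + y) * exp (- s * norm (-x + y) ^ 2) \<partial>lborel)
      = (\<integral>w. indicator {w::pt. d \<le> norm w} w * exp (- s * norm w ^ 2) \<partial>lborel)"
    using translate_integral[of "\<lambda>w::pt. indicator {w::pt. d \<le> norm w} w * exp (- s * norm w ^ 2)" "-x"] by simp
  moreover have "norm (-x + y) = norm (x - y)" for y :: pt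
    by (metis add.commute norm_minus_commute uminus_add_conv_diff)
  moreover have "G s \<noteq> 0" using G_pos[OF s] by simp
  ultimately show ?thesis unfolding Tl_def by (auto simp: indicator_def)
qed

lemma Aq_bounds: assumes B: "B \<in> sets borel" and s: "0 < s" shows "0 \<le> Aq B s x" "Aq B s x \<le> 1"
proof -
  have Gs: "0 < G s" by (rule G_pos[OF s])
  have "0 \<le> (\<integral>z. indicator B z * exp (- s * norm (x - z)^2) \<partial>lborel)" by (rule integral_nonneg_AE) auto
  then show "0 \<le> Aq B s x" unfolding Aq_def using Gs by simp
  have "(\<integral>z. indicator B z * exp (- s * norm (x - z)^2) \<partial>lborel) \<le> (\<integral>z. exp (- s * norm (x - z)^2) \<partial>lborel)"
  proof (rule integral_mono)
    show "integrable lborel (\<lambda>z. indicator B z * exp (- s * norm (x - z)^2))" by (rule ind_gauss_integrable[OF B s])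
    show "integrable lborel (\<lambda>z. exp (- s * norm (x - z)^2))"
      using gauss_shift_integrable[OF s, of x] by (simp add: norm_minus_commute)
  qed (simp add: indicator_def)
  then show "Aq B s x \<le> 1" unfolding Aq_def gauss_full using Gs by simp
qed

lemma Aq_in: assumes B: "B \<in> sets borel" and s: "0 < s" and d: "ball x d \<subseteq> B"
  shows "1 - Aq B s x \<le> Tl s d"
proof -
  have Gs: "0 < G s" by (rule G_pos[OF s])
  have i1: "integrable lborel (\<lambda>z. indicator B z * exp (- s * norm (x - z)^2))" by (rule ind_gauss_integrable[OF B s])
  have i2: "integrable lborel (\<lambda>z. exp (- s * norm (x - z)^2))"
    using gauss_shift_integrable[OF s, of x] by (simp add: norm_minus_commute)
  have i3: "integrable lborel (\<lambda>z. indicator {z. d \<le> norm (x - z)} z * exp (- s * norm (x - z)^2))"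
    by (rule ind_gauss_integrable[OF _ s]) measurable
  have "G s - (\<integral>z. indicator B z * exp (- s * norm (x - z)^2) \<partial>lborel)
      = (\<integral>z. exp (- s * norm (x - z)^2) - indicator B z * exp (- s * norm (x - z)^2) \<partial>lborel)"
    using Bochner_Integration.integral_diff[OF i2 i1] gauss_full[of s x] by simp
  also have "\<dots> \<le> (\<integral>z. indicator {z. d \<le> norm (x - z)} z * exp (- s * norm (x - z)^2) \<partial>lborel)"
  proof (rule integral_mono)
    show "integrable lborel (\<lambda>z. exp (- s * norm (x - z)^2) - indicator B z * exp (- s * norm (x - z)^2))"
      using i1 i2 by auto
    show "integrable lborel (\<lambda>z. indicator {z. d \<le> norm (x - z)} z * exp (- s * norm (x - z)^2))" by (rule i3)
    fix z
    show "exp (- s * norm (x - z)^2) - indicator B z * exp (- s * norm (x - z)^2) \<le> indicator {z. d \<le> norm (x - z)} z * exp (- s * norm (x - z)^2)"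
    proof (cases "z \<in> B")
      case False
      then have "z \<notin> ball x d" using d by auto
      then have "d \<le> norm (x - z)" by (simp add: dist_norm)
      then show ?thesis using False by simp
    qed simp
  qed
  also have "\<dots> = Tl s d * G s" by (rule Tl_shift[OF s])
  finally show ?thesis unfolding Aq_def using Gs by (simp add: field_simps)
qed

lemma Aq_out: assumes B: "B \<in> sets borel" and s: "0 < s" and d: "ball x d \<inter> B = {}"
  shows "Aq B s x \<le> Tl s d"
proof -
  have Gs: "0 < G s" by (rule G_pos[OF s])
  have "(\<integral>z. indicator B z * exp (- s * norm (x - z)^2) \<partial>lborel) \<le> (\<integral>z. indicator {z. d \<le> norm (x - z)} z * exp (- s * norm (x - z)^2) \<partial>lborel)"
  proof (rule integral_mono)
    show "integrable lborel (\<lambda>z. indicator B z * exp (- s * norm (x - z)^2))" by (rule ind_gauss_integrable[OF B s])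
    show "integrable lborel (\<lambda>z. indicator {z. d \<le> norm (x - z)} z * exp (- s * norm (x - z)^2))"
      by (rule ind_gauss_integrable[OF _ s]) measurable
    fix z
    show "indicator B z * exp (- s * norm (x - z)^2) \<le> indicator {z. d \<le> norm (x - z)} z * exp (- s * norm (x - z)^2)"
    proof (cases "z \<in> B")
      case True
      then have "z \<notin> ball x d" using d by auto
      then have "d \<le> norm (x - z)" by (simp add: dist_norm)
      then show ?thesis using True by simp
    qed simp
  qed
  also have "\<dots> = Tl s d * G s" by (rule Tl_shift[OF s])
  finally show ?thesis unfolding Aq_def using Gs by (simp add: field_simps)
qed

lemma frontier_null: "(cbox a b - box a b :: pt set) \<in> null_sets lborel"
proof -
  have "emeasure lborel (cbox a b - box a b :: pt set) = emeasure lborel (cbox a b) - emeasure lborel (box a b)"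
    by (rule emeasure_Diff) (auto simp: box_subset_cbox emeasure_lborel_cbox_eq emeasure_lborel_box_eq)
  also have "\<dots> = 0" by (simp add: emeasure_lborel_cbox_eq emeasure_lborel_box_eq)
  finally show ?thesis by auto
qed

lemma Aq_meas[measurable]: "B \<in> sets borel \<Longrightarrow> Aq B s \<in> borel_measurable lborel"
proof -
  assume B[measurable]: "B \<in> sets borel"
  have "(\<lambda>x. \<integral>z. indicator B z * exp (- s * norm (x - z)^2) \<partial>lborel) \<in> borel_measurable lborel"
    by (rule lborel.borel_measurable_lebesgue_integral) measurable
  then show ?thesis unfolding Aq_def by measurable
qed

lemma uf_meas[measurable]: "f \<in> borel_measurable borel \<Longrightarrow> uf f s \<in> borel_measurable lborel"
proof -
  assume [measurable]: "f \<in> borel_measurable borel"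
  show ?thesis unfolding uf_def
    by (rule lborel.borel_measurable_lebesgue_integral) measurable
qed

lemma Aq_integral_zero:
  assumes fi: "integrable lborel f" and B[measurable]: "B \<in> sets borel" and s: "0 < s"
    and u0: "AE z in lborel. uf f s z = 0"
  shows "(\<integral>x. f x * Aq B s x \<partial>lborel) = 0"
proof -
  have fm[measurable]: "f \<in> borel_measurable borel" using fi by auto
  have Gs: "0 < G s" by (rule G_pos[OF s])
  define K where "K = (\<lambda>x z::pt. f x * (indicator B z * exp (- s * norm (x - z)^2)))"
  have Km[measurable]: "case_prod K \<in> borel_measurable PP" unfolding K_def by measurable
  have Kint: "integrable PP (case_prod K)"
  proof (rule integrableI_bounded)
    show "case_prod K \<in> borel_measurable PP" by simp
    have "(\<integral>\<^sup>+p. ennreal (norm (case_prod K p)) \<partial>PP) = (\<integral>\<^sup>+x. \<integral>\<^sup>+z. ennreal (norm (K x z)) \<partial>lborel \<partial>lborel)"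
      using lborel.nn_integral_fst[of "\<lambda>p. ennreal (norm (case_prod K p))" lborel] by simp
    also have "\<dots> \<le> (\<integral>\<^sup>+x. \<integral>\<^sup>+z. ennreal (norm (f x)) * ennreal (exp (- s * norm (x - z)^2)) \<partial>lborel \<partial>lborel)"
      unfolding K_def by (intro nn_integral_mono) (auto simp: abs_mult ennreal_mult[symmetric] indicator_def intro!: ennreal_leI)
    also have "\<dots> = (\<integral>\<^sup>+x. ennreal (norm (f x)) * ennreal (G s) \<partial>lborel)"
    proof (rule nn_integral_cong)
      fix x :: pt
      have ii: "integrable lborel (\<lambda>z. exp (- s * norm (x - z)^2))"
        using gauss_shift_integrable[OF s, of x] by (simp add: norm_minus_commute)
      have "(\<integral>\<^sup>+z. ennreal (exp (- s * norm (x - z)^2)) \<partial>lborel) = ennreal (G s)"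
        using nn_integral_eq_integral[OF ii] gauss_full[of s x] by simp
      then show "(\<integral>\<^sup>+z. ennreal (norm (f x)) * ennreal (exp (- s * norm (x - z)^2)) \<partial>lborel) = ennreal (norm (f x)) * ennreal (G s)"
        by (subst nn_integral_cmult) auto
    qed
    also have "\<dots> = (\<integral>\<^sup>+x. ennreal (norm (f x)) \<partial>lborel) * ennreal (G s)"
      by (rule nn_integral_multc) measurable
    also have "\<dots> < \<infinity>" using nn_norm_finite[OF fi] by (simp add: ennreal_mult_less_top)
    finally show "(\<integral>\<^sup>+p. ennreal (norm (case_prod K p)) \<partial>PP) < \<infinity>" .
  qed
  have "(\<integral>x. \<integral>z. K x z \<partial>lborel \<partial>lborel) = (\<integral>z. \<integral>x. K x z \<partial>lborel \<partial>lborel)"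
    by (rule lborel_pair.Fubini_integral[OF Kint, symmetric])
  also have "\<dots> = (\<integral>z. indicator B z * uf f s z \<partial>lborel)"
  proof (rule Bochner_Integration.integral_cong[OF refl])
    fix z
    have "(\<integral>x. K x z \<partial>lborel) = (\<integral>x. indicator B z * (f x * exp (- s * norm (x - z)^2)) \<partial>lborel)"
      unfolding K_def by (rule Bochner_Integration.integral_cong[OF refl]) (simp add: mult_ac)
    also have "\<dots> = indicator B z * uf f s z" unfolding uf_def by (rule integral_mult_right_zero)
    finally show "(\<integral>x. K x z \<partial>lborel) = indicator B z * uf f s z" .
  qed
  also have "\<dots> = 0"
    by (rule integral_eq_zero_AE) (use u0 in \<open>auto elim!: eventually_mono\<close>)
  finally have z: "(\<integral>x. \<integral>z. K x z \<partial>lborel \<partial>lborel) = 0" by simp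
  have "(\<integral>x. \<integral>z. K x z \<partial>lborel \<partial>lborel) = (\<integral>x. G s * (f x * Aq B s x) \<partial>lborel)"
  proof (rule Bochner_Integration.integral_cong[OF refl])
    fix x
    have "(\<integral>z. K x z \<partial>lborel) = f x * (\<integral>z. indicator B z * exp (- s * norm (x - z)^2) \<partial>lborel)"
      unfolding K_def by (rule integral_mult_right_zero)
    then show "(\<integral>z. K x z \<partial>lborel) = G s * (f x * Aq B s x)" unfolding Aq_def using Gs by simp
  qed
  also have "\<dots> = G s * (\<integral>x. f x * Aq B s x \<partial>lborel)" by simp
  finally show ?thesis using z Gs by simp
qed

lemma box_zero:
  assumes fi: "integrable lborel f"
    and hyp: "\<And>n::nat. \<exists>s. real n \<le> s \<and> 0 < s \<and> (AE z in lborel. uf f s z = 0)"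
  shows "(\<integral>x. f x * indicator (box a b) x \<partial>lborel) = 0"
proof -
  have fm[measurable]: "f \<in> borel_measurable borel" using fi by auto
  define B where "B = (box a b :: pt set)"
  have Bm[measurable]: "B \<in> sets borel" unfolding B_def by simp
  from hyp have "\<forall>n::nat. \<exists>s. real n \<le> s \<and> 0 < s \<and> (AE z in lborel. uf f s z = 0)" by blast
  from choice[OF this] obtain sq where sq0: "\<forall>n. real n \<le> sq n \<and> 0 < sq n \<and> (AE z in lborel. uf f (sq n) z = 0)"
    by blast
  have sq: "\<And>n. real n \<le> sq n" "\<And>n. 0 < sq n" "\<And>n. AE z in lborel. uf f (sq n) z = 0"
    using sq0 by auto
  have tend: "filterlim sq at_top sequentially"
    by (rule filterlim_at_top_mono[OF filterlim_real_sequentially]) (use sq(1) in auto)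
  have Tlim: "(\<lambda>n. Tl (sq n) d) \<longlonglongrightarrow> 0" if "0 < d" for d
    by (rule filterlim_compose[OF Tl_lim[OF that] tend])
  have zero: "(\<integral>x. f x * Aq B (sq n) x \<partial>lborel) = 0" for n
    by (rule Aq_integral_zero[OF fi Bm sq(2) sq(3)])
  have lim: "(\<lambda>n. \<integral>x. f x * Aq B (sq n) x \<partial>lborel) \<longlonglongrightarrow> (\<integral>x. f x * indicator B x \<partial>lborel)"
  proof (rule integral_dominated_convergence[where w = "\<lambda>x. norm (f x)"])
    show "(\<lambda>x. f x * indicator B x) \<in> borel_measurable lborel"
      using fi Bm by (intro borel_measurable_times borel_measurable_indicator) auto
    show "(\<lambda>x. f x * Aq B (sq n) x) \<in> borel_measurable lborel" for n
      using Aq_meas[OF Bm, of "sq n"] fi by (intro borel_measurable_times) auto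
    show "integrable lborel (\<lambda>x. norm (f x))" using fi by simp
    show "AE x in lborel. norm (f x * Aq B (sq n) x) \<le> norm (f x)" for n
    proof (rule AE_I2)
      fix x
      have "0 \<le> Aq B (sq n) x" "Aq B (sq n) x \<le> 1" using Aq_bounds[OF Bm sq(2)] by auto
      then show "norm (f x * Aq B (sq n) x) \<le> norm (f x)" by (simp add: abs_mult mult_left_le)
    qed
    show "AE x in lborel. (\<lambda>n. f x * Aq B (sq n) x) \<longlonglongrightarrow> f x * indicator B x"
      using AE_not_in[OF frontier_null[of a b]]
    proof (rule eventually_mono)
      fix x :: pt assume x: "x \<notin> cbox a b - box a b"
      have "(\<lambda>n. Aq B (sq n) x) \<longlonglongrightarrow> indicator B x"
      proof (cases "x \<in> B")
        case True
        have oB: "open B" unfolding B_def by (rule open_box)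
        obtain d where d: "0 < d" "ball x d \<subseteq> B"
          using openE[OF oB True] by blast
        have "(\<lambda>n. 1 - Aq B (sq n) x) \<longlonglongrightarrow> 0"
        proof (rule tendsto_sandwich[OF _ _ tendsto_const Tlim[OF d(1)]])
          show "\<forall>\<^sub>F n in sequentially. 0 \<le> 1 - Aq B (sq n) x" using Aq_bounds(2)[OF Bm sq(2)] by simp
          show "\<forall>\<^sub>F n in sequentially. 1 - Aq B (sq n) x \<le> Tl (sq n) d" using Aq_in[OF Bm sq(2) d(2)] by simp
        qed
        then have "(\<lambda>n. 1 - (1 - Aq B (sq n) x)) \<longlonglongrightarrow> 1 - 0" by (intro tendsto_diff tendsto_const)
        then show ?thesis using True by simp
      next
        case False
        then have xc: "x \<in> - cbox a b" using x unfolding B_def by auto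
        have oC: "open (- cbox a b)" by (simp add: open_Compl closed_cbox)
        obtain d where d: "0 < d" "ball x d \<subseteq> - cbox a b"
          using openE[OF oC xc] by blast
        have dd: "ball x d \<inter> B = {}" using d(2) box_subset_cbox[of a b] unfolding B_def by auto
        have "(\<lambda>n. Aq B (sq n) x) \<longlonglongrightarrow> 0"
        proof (rule tendsto_sandwich[OF _ _ tendsto_const Tlim[OF d(1)]])
          show "\<forall>\<^sub>F n in sequentially. 0 \<le> Aq B (sq n) x" using Aq_bounds(1)[OF Bm sq(2)] by simp
          show "\<forall>\<^sub>F n in sequentially. Aq B (sq n) x \<le> Tl (sq n) d" using Aq_out[OF Bm sq(2) dd] by simp
        qed
        then show ?thesis using False by simp
      qed
      then show "(\<lambda>n. f x * Aq B (sq n) x) \<longlonglongrightarrow> f x * indicator B x" by (intro tendsto_mult tendsto_const)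
    qed
  qed
  then have l0: "(\<lambda>n. 0::real) \<longlonglongrightarrow> (\<integral>x. f x * indicator B x \<partial>lborel)" by (simp only: zero)
  have "(0::real) = (\<integral>x. f x * indicator B x \<partial>lborel)" by (rule LIMSEQ_unique[OF tendsto_const l0])
  then show ?thesis unfolding B_def by simp
qed

lemma boxes_zero_AE:
  fixes f :: "pt \<Rightarrow> real"
  assumes fi: "integrable lborel f" and hb: "\<And>a b. (\<integral>x. f x * indicator (box a b) x \<partial>lborel) = 0"
  shows "AE x in lborel. f x = 0"
proof -
  have fm[measurable]: "f \<in> borel_measurable borel" using fi by auto
  define fp where "fp x = max (f x) 0" for x
  define fn where "fn x = max (- f x) 0" for x
  have fpm[measurable]: "fp \<in> borel_measurable borel" unfolding fp_def by measurable
  have fnm[measurable]: "fn \<in> borel_measurable borel" unfolding fn_def by measurable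
  have fpi: "integrable lborel fp" unfolding fp_def using fi by auto
  have fni: "integrable lborel fn" unfolding fn_def using fi by auto
  have fpn: "f x = fp x - fn x" for x unfolding fp_def fn_def by auto
  have emb: "emeasure (density lborel (\<lambda>x. ennreal (g x))) (box a b) = ennreal (\<integral>x. g x * indicator (box a b) x \<partial>lborel)"
    if gi: "integrable lborel g" and g0: "\<And>x. 0 \<le> g x" for g :: "pt \<Rightarrow> real" and a b
  proof -
    have gm[measurable]: "g \<in> borel_measurable borel" using gi by auto
    have gbi: "integrable lborel (\<lambda>x. g x * indicator (box a b) x)"
      using gi by (intro integrable_real_mult_indicator) auto
    have "emeasure (density lborel (\<lambda>x. ennreal (g x))) (box a b) = (\<integral>\<^sup>+x. ennreal (g x) * indicator (box a b) x \<partial>lborel)"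
      by (rule emeasure_density) auto
    also have "\<dots> = (\<integral>\<^sup>+x. ennreal (g x * indicator (box a b) x) \<partial>lborel)"
      by (intro nn_integral_cong) (simp split: split_indicator)
    also have "\<dots> = ennreal (\<integral>x. g x * indicator (box a b) x \<partial>lborel)"
      using g0 by (intro nn_integral_eq_integral gbi) auto
    finally show ?thesis .
  qed
  have eqbox: "(\<integral>x. fp x * indicator (box a b) x \<partial>lborel) = (\<integral>x. fn x * indicator (box a b) x \<partial>lborel)" for a b
  proof -
    have i1: "integrable lborel (\<lambda>x. fp x * indicator (box a b) x)" using fpi by (intro integrable_real_mult_indicator) auto
    have i2: "integrable lborel (\<lambda>x. fn x * indicator (box a b) x)" using fni by (intro integrable_real_mult_indicator) auto
    have "0 = (\<integral>x. f x * indicator (box a b) x \<partial>lborel)" using hb by simp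
    also have "\<dots> = (\<integral>x. fp x * indicator (box a b) x - fn x * indicator (box a b) x \<partial>lborel)"
      by (simp add: fpn left_diff_distrib)
    also have "\<dots> = (\<integral>x. fp x * indicator (box a b) x \<partial>lborel) - (\<integral>x. fn x * indicator (box a b) x \<partial>lborel)"
      using i1 i2 by simp
    finally show ?thesis by simp
  qed
  define E where "E = range (\<lambda>(a, b). box a b :: pt set)"
  define A where "A i = box (- (real i *\<^sub>R One)) (real i *\<^sub>R One :: pt)" for i :: nat
  have dens: "density lborel (\<lambda>x. ennreal (fp x)) = density lborel (\<lambda>x. ennreal (fn x))"
  proof (rule measure_eqI_generator_eq[where E = E and \<Omega> = UNIV and A = A])
    show "Int_stable E" unfolding E_def by (auto simp: Int_stable_def box_Int_box)
    show "E \<subseteq> Pow UNIV" by simp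
    show "emeasure (density lborel (\<lambda>x. ennreal (fp x))) X = emeasure (density lborel (\<lambda>x. ennreal (fn x))) X" if "X \<in> E" for X
    proof -
      obtain a b where X: "X = box a b" using \<open>X \<in> E\<close> unfolding E_def by auto
      show ?thesis unfolding X using emb[OF fpi, of a b] emb[OF fni, of a b] eqbox[of a b]
        by (simp add: fp_def fn_def)
    qed
    show "sets (density lborel (\<lambda>x. ennreal (fp x))) = sigma_sets UNIV E"
      unfolding E_def by (simp add: borel_eq_box)
    show "sets (density lborel (\<lambda>x. ennreal (fn x))) = sigma_sets UNIV E"
      unfolding E_def by (simp add: borel_eq_box)
    show "range A \<subseteq> E" unfolding A_def E_def by auto
    show "\<Union> (range A) = UNIV"
    proof (intro set_eqI iffI)
      fix x :: pt
      obtain i :: nat where i: "norm x < real i" using reals_Archimedean2 by blast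
      have "x \<in> A i" unfolding A_def mem_box
      proof (intro ballI conjI)
        fix b :: pt assume b: "b \<in> Basis"
        have xb: "\<bar>x \<bullet> b\<bar> \<le> norm x" using b by (rule Basis_le_norm)
        have "(- (real i *\<^sub>R One)) \<bullet> b = - real i" "(real i *\<^sub>R One) \<bullet> b = real i"
          using b inner_sum_Basis[OF b] by (auto simp: inner_minus_left)
        then show "(- (real i *\<^sub>R One)) \<bullet> b < x \<bullet> b" "x \<bullet> b < (real i *\<^sub>R One) \<bullet> b"
          using i xb by auto
      qed
      then show "x \<in> \<Union> (range A)" by auto
    qed auto
    show "emeasure (density lborel (\<lambda>x. ennreal (fp x))) (A i) \<noteq> \<infinity>" for i
    proof -
      have "emeasure (density lborel (\<lambda>x. ennreal (fp x))) (A i) = ennreal (\<integral>x. fp x * indicator (A i) x \<partial>lborel)"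
        unfolding A_def by (rule emb[OF fpi]) (simp add: fp_def)
      then show ?thesis by simp
    qed
  qed
  have "AE x in lborel. ennreal (fp x) = ennreal (fn x)"
    by (rule sigma_finite_measure.density_unique[OF lborel.sigma_finite_measure_axioms _ _ dens]) auto
  then show ?thesis
  proof (rule eventually_mono)
    fix x assume "ennreal (fp x) = ennreal (fn x)"
    then have "fp x = fn x" unfolding fp_def fn_def by (simp add: ennreal_inj)
    then show "f x = 0" by (simp add: fpn)
  qed
qed

lemma J_neg:
  assumes f: "good f" and f0: "(\<integral>x. f x \<partial>lborel) = 0" and nz: "\<not> (AE x in lborel. f x = 0)"
  shows "J f f < 0"
proof -
  have fi: "integrable lborel f" by (rule good_int[OF f])
  have "J f f \<le> 0" by (rule J_nonpos[OF f f0])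
  moreover have "J f f \<noteq> 0"
  proof
    assume J0: "J f f = 0"
    have "(\<integral>x. f x * indicator (box a b) x \<partial>lborel) = 0" for a b
      by (rule box_zero[OF fi J_zero[OF f f0 J0]])
    then have "AE x in lborel. f x = 0" by (rule boxes_zero_AE[OF fi])
    then show False using nz by simp
  qed
  ultimately show ?thesis by simp
qed

definition Vi :: "nat \<Rightarrow> (nat \<Rightarrow> pt) \<Rightarrow> (pt \<Rightarrow> real) \<Rightarrow> real" where
  "Vi K xs r = (\<integral>x. V_nuc K xs x * r x \<partial>lborel)"

lemma V_meas[measurable]: "V_nuc K xs \<in> borel_measurable borel"
  unfolding V_nuc_def by measurable

lemma V_integrable: assumes r: "good r" shows "integrable lborel (\<lambda>x. V_nuc K xs x * r x)"
proof -
  have "integrable lborel (\<lambda>x. - (\<Sum>i<K. ln (norm (xs i - x)) * r x))"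
    using integrable_log_inner[OF r] by auto
  moreover have "(\<lambda>x. - (\<Sum>i<K. ln (norm (xs i - x)) * r x)) = (\<lambda>x. V_nuc K xs x * r x)"
    unfolding V_nuc_def by (auto simp: sum_distrib_right norm_minus_commute)
  ultimately show ?thesis by simp
qed

lemma Vi_lin: assumes "good u" "good v"
  shows "Vi K xs (\<lambda>x. \<alpha> * u x + \<beta> * v x) = \<alpha> * Vi K xs u + \<beta> * Vi K xs v"
proof -
  have "Vi K xs (\<lambda>x. \<alpha> * u x + \<beta> * v x) = (\<integral>x. \<alpha> * (V_nuc K xs x * u x) + \<beta> * (V_nuc K xs x * v x) \<partial>lborel)"
    unfolding Vi_def by (rule Bochner_Integration.integral_cong[OF refl]) (simp add: algebra_simps)
  also have "\<dots> = \<alpha> * Vi K xs u + \<beta> * Vi K xs v"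
    unfolding Vi_def using V_integrable[OF assms(1)] V_integrable[OF assms(2)] by simp
  finally show ?thesis .
qed

lemma E_rep:
  assumes sm: "s \<in> borel_measurable lebesgue" and r: "good r" and ae: "AE x in lebesgue. s x = r x"
  shows "E_TF K xs s = - Vi K xs r - 1/2 * J r r"
proof -
  have rm[measurable]: "r \<in> borel_measurable borel" using r by (simp add: good_def)
  have rml: "r \<in> borel_measurable lebesgue" by (rule measurable_completion) simp
  have V: "(\<integral>x. V_nuc K xs x * s x \<partial>lebesgue) = Vi K xs r"
  proof -
    have "(\<integral>x. V_nuc K xs x * s x \<partial>lebesgue) = (\<integral>x. V_nuc K xs x * r x \<partial>lebesgue)"
    proof (rule integral_cong_AE)
      have Vl: "V_nuc K xs \<in> borel_measurable lebesgue" by (rule measurable_completion) simp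
      show "(\<lambda>x. V_nuc K xs x * s x) \<in> borel_measurable lebesgue"
        using Vl sm by (rule borel_measurable_times)
      show "(\<lambda>x. V_nuc K xs x * r x) \<in> borel_measurable lebesgue"
        by (rule measurable_completion) simp
      show "AE x in lebesgue. V_nuc K xs x * s x = V_nuc K xs x * r x" using ae by (auto elim!: eventually_mono)
    qed
    also have "\<dots> = Vi K xs r" unfolding Vi_def by (rule integral_completion) simp
    finally show ?thesis .
  qed
  define h where "h x = (\<integral>y. ln (norm (x - y)) * r y \<partial>lborel)" for x
  have hm[measurable]: "h \<in> borel_measurable lborel"
    unfolding h_def by (rule lborel.borel_measurable_lebesgue_integral) measurable
  have inner: "(\<integral>y. s x * ln (norm (x - y)) * s y \<partial>lebesgue) = s x * h x" for x
  proof -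
    have "(\<integral>y. s x * ln (norm (x - y)) * s y \<partial>lebesgue) = (\<integral>y. s x * (ln (norm (x - y)) * r y) \<partial>lebesgue)"
    proof (rule integral_cong_AE)
      have ll: "(\<lambda>y. s x * ln (norm (x - y))) \<in> borel_measurable lebesgue" by (rule measurable_completion) simp
      show "(\<lambda>y. s x * ln (norm (x - y)) * s y) \<in> borel_measurable lebesgue"
        using ll sm by (rule borel_measurable_times)
      show "(\<lambda>y. s x * (ln (norm (x - y)) * r y)) \<in> borel_measurable lebesgue"
        by (rule measurable_completion) simp
      show "AE y in lebesgue. s x * ln (norm (x - y)) * s y = s x * (ln (norm (x - y)) * r y)"
        using ae by (rule eventually_mono) simp
    qed
    also have "\<dots> = (\<integral>y. s x * (ln (norm (x - y)) * r y) \<partial>lborel)" by (rule integral_completion) simp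
    also have "\<dots> = s x * h x" unfolding h_def by (rule integral_mult_right_zero)
    finally show ?thesis .
  qed
  have D: "D_TF s = - 1/2 * J r r"
  proof -
    have "(\<integral>x. (\<integral>y. s x * ln (norm (x - y)) * s y \<partial>lebesgue) \<partial>lebesgue) = (\<integral>x. s x * h x \<partial>lebesgue)"
      by (simp add: inner)
    also have "\<dots> = (\<integral>x. r x * h x \<partial>lebesgue)"
    proof (rule integral_cong_AE)
      have hl: "h \<in> borel_measurable lebesgue" by (rule measurable_completion) simp
      show "(\<lambda>x. s x * h x) \<in> borel_measurable lebesgue"
        using sm hl by (rule borel_measurable_times)
      show "(\<lambda>x. r x * h x) \<in> borel_measurable lebesgue"
        by (rule measurable_completion) simp
      show "AE x in lebesgue. s x * h x = r x * h x" using ae by (auto elim!: eventually_mono)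
    qed
    also have "\<dots> = (\<integral>x. r x * h x \<partial>lborel)" by (rule integral_completion) simp
    also have "\<dots> = Bf r r" unfolding Bf_def h_def ..
    also have "\<dots> = J r r" by (rule Bf_J[OF r r])
    finally show ?thesis unfolding D_TF_def by simp
  qed
  show ?thesis unfolding E_TF_def V D by simp
qed

lemma rep_exists:
  assumes s: "s \<in> M_TF K"
  obtains r where "good r" "\<And>x. 0 \<le> r x" "\<And>x. r x \<le> 1" "AE x in lebesgue. s x = r x"
    "(\<integral>x. r x \<partial>lborel) = real K"
proof -
  have sm: "s \<in> borel_measurable lebesgue" and aeb: "AE x in lebesgue. 0 \<le> s x \<and> s x \<le> 1"
    and il: "integrable lebesgue (\<lambda>x. s x * ln (2 + norm x))" and int: "(\<integral>x. s x \<partial>lebesgue) = real K"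
    using s unfolding M_TF_def by auto
  obtain g where gm: "g \<in> borel_measurable lborel" and gae: "AE x in lborel. s x = g x"
    using completion_ex_borel_measurable_real[OF sm] by blast
  define r where "r x = min 1 (max 0 (g x))" for x
  have rm[measurable]: "r \<in> borel_measurable borel" unfolding r_def using gm by simp
  have r01: "0 \<le> r x" "r x \<le> 1" for x unfolding r_def by auto
  have aeb': "AE x in lborel. 0 \<le> s x \<and> s x \<le> 1" using aeb by (simp add: AE_completion_iff)
  have ae_lb: "AE x in lborel. s x = r x" using gae aeb' unfolding r_def by (auto elim!: eventually_elim2)
  have ae: "AE x in lebesgue. s x = r x" by (rule AE_completion[OF ae_lb])
  have rLl: "integrable lebesgue (\<lambda>x. r x * Lg x)"
  proof -
    have "integrable lebesgue (\<lambda>x. s x * ln (2 + norm x)) = integrable lebesgue (\<lambda>x. r x * Lg x)"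
    proof (rule integrable_cong_AE)
      have ll: "(\<lambda>x::pt. ln (2 + norm x)) \<in> borel_measurable lebesgue" by (rule measurable_completion) simp
      show "(\<lambda>x. s x * ln (2 + norm x)) \<in> borel_measurable lebesgue" using sm ll by (rule borel_measurable_times)
      show "(\<lambda>x. r x * Lg x) \<in> borel_measurable lebesgue" by (rule measurable_completion) simp
      show "AE x in lebesgue. s x * ln (2 + norm x) = r x * Lg x" using ae by (rule eventually_mono) (simp add: Lg_def)
    qed
    then show ?thesis using il by simp
  qed
  have rL: "integrable lborel (\<lambda>x. r x * Lg x)" using rLl by (subst (asm) integrable_completion) simp_all
  have good: "good r" unfolding good_def using r01 rL by (auto intro!: exI[of _ 1])
  have "(\<integral>x. r x \<partial>lborel) = (\<integral>x. r x \<partial>lebesgue)" by (rule integral_completion[symmetric]) simp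
  also have "\<dots> = (\<integral>x. s x \<partial>lebesgue)"
  proof (rule integral_cong_AE)
    show "r \<in> borel_measurable lebesgue" by (rule measurable_completion) simp
    show "s \<in> borel_measurable lebesgue" by (rule sm)
    show "AE x in lebesgue. r x = s x" using ae by (auto elim!: eventually_mono)
  qed
  finally show ?thesis using that good r01 ae int by auto
qed

lemma strict_convex:
  assumes s1: "s1 \<in> M_TF K" and s2: "s2 \<in> M_TF K" and t: "0 < t" "t < 1"
  shows "(\<lambda>x. t * s1 x + (1 - t) * s2 x) \<in> M_TF K"
    and "\<not> (AE x in lebesgue. s1 x = s2 x) \<Longrightarrow>
      E_TF K xs (\<lambda>x. t * s1 x + (1 - t) * s2 x) < t * E_TF K xs s1 + (1 - t) * E_TF K xs s2"
proof -
  have sm1: "s1 \<in> borel_measurable lebesgue" and aeb1: "AE x in lebesgue. 0 \<le> s1 x \<and> s1 x \<le> 1"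
    and il1: "integrable lebesgue (\<lambda>x. s1 x * ln (2 + norm x))" and int1: "(\<integral>x. s1 x \<partial>lebesgue) = real K"
    using s1 unfolding M_TF_def by auto
  have sm2: "s2 \<in> borel_measurable lebesgue" and aeb2: "AE x in lebesgue. 0 \<le> s2 x \<and> s2 x \<le> 1"
    and il2: "integrable lebesgue (\<lambda>x. s2 x * ln (2 + norm x))" and int2: "(\<integral>x. s2 x \<partial>lebesgue) = real K"
    using s2 unfolding M_TF_def by auto
  have ii1: "integrable lebesgue s1"
  proof -
    have "integrable lebesgue (\<lambda>x. s1 x * ln (2 + norm x) / ln 2)" using il1 by auto
    then show ?thesis
    proof (rule Bochner_Integration.integrable_bound)
      show "s1 \<in> borel_measurable lebesgue" by (rule sm1)
      show "AE x in lebesgue. norm (s1 x) \<le> norm (s1 x * ln (2 + norm x) / ln 2)"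
        using aeb1
      proof (rule eventually_mono)
        fix x assume "0 \<le> s1 x \<and> s1 x \<le> 1"
        moreover have "ln 2 \<le> ln (2 + norm x)" using Lg_ge(1)[of x] by (simp add: Lg_def)
        ultimately show "norm (s1 x) \<le> norm (s1 x * ln (2 + norm x) / ln 2)"
          by (simp add: field_simps abs_mult mult_left_mono)
      qed
    qed
  qed
  have ii2: "integrable lebesgue s2"
  proof -
    have "integrable lebesgue (\<lambda>x. s2 x * ln (2 + norm x) / ln 2)" using il2 by auto
    then show ?thesis
    proof (rule Bochner_Integration.integrable_bound)
      show "s2 \<in> borel_measurable lebesgue" by (rule sm2)
      show "AE x in lebesgue. norm (s2 x) \<le> norm (s2 x * ln (2 + norm x) / ln 2)"
        using aeb2
      proof (rule eventually_mono)
        fix x assume "0 \<le> s2 x \<and> s2 x \<le> 1"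
        moreover have "ln 2 \<le> ln (2 + norm x)" using Lg_ge(1)[of x] by (simp add: Lg_def)
        ultimately show "norm (s2 x) \<le> norm (s2 x * ln (2 + norm x) / ln 2)"
          by (simp add: field_simps abs_mult mult_left_mono)
      qed
    qed
  qed
  show "(\<lambda>x. t * s1 x + (1 - t) * s2 x) \<in> M_TF K"
    unfolding M_TF_def
  proof (intro CollectI conjI)
    show "(\<lambda>x. t * s1 x + (1 - t) * s2 x) \<in> borel_measurable lebesgue" using sm1 sm2 by simp
    show "AE x in lebesgue. 0 \<le> t * s1 x + (1 - t) * s2 x \<and> t * s1 x + (1 - t) * s2 x \<le> 1"
      using aeb1 aeb2
    proof eventually_elim
      case (elim x)
      have a: "0 \<le> t * s1 x" "0 \<le> (1 - t) * s2 x" using elim t by auto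
      have "t * s1 x \<le> t * 1" "(1 - t) * s2 x \<le> (1 - t) * 1" using elim t by (intro mult_left_mono; simp)+
      then show ?case using a by simp
    qed
    have "integrable lebesgue (\<lambda>x. t * (s1 x * ln (2 + norm x)) + (1 - t) * (s2 x * ln (2 + norm x)))"
      using il1 il2 by auto
    then show "integrable lebesgue (\<lambda>x. (t * s1 x + (1 - t) * s2 x) * ln (2 + norm x))"
      by (simp add: algebra_simps)
    show "(\<integral>x. t * s1 x + (1 - t) * s2 x \<partial>lebesgue) = real K"
      using ii1 ii2 int1 int2 by (simp add: algebra_simps)
  qed
  assume nae: "\<not> (AE x in lebesgue. s1 x = s2 x)"
  obtain r1 where r1: "good r1" "AE x in lebesgue. s1 x = r1 x" "(\<integral>x. r1 x \<partial>lborel) = real K"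
    using rep_exists[OF s1] by metis
  obtain r2 where r2: "good r2" "AE x in lebesgue. s2 x = r2 x" "(\<integral>x. r2 x \<partial>lborel) = real K"
    using rep_exists[OF s2] by metis
  define d where "d = (\<lambda>x. 1 * r1 x + (-1) * r2 x)"
  have dg: "good d" unfolding d_def by (rule good_lin[OF r1(1) r2(1)])
  have d0: "(\<integral>x. d x \<partial>lborel) = 0"
    unfolding d_def using good_int[OF r1(1)] good_int[OF r2(1)] r1(3) r2(3) by simp
  have dnz: "\<not> (AE x in lborel. d x = 0)"
  proof
    assume "AE x in lborel. d x = 0"
    then have "AE x in lebesgue. d x = 0" by (rule AE_completion)
    then have "AE x in lebesgue. s1 x = s2 x" using r1(2) r2(2)
      by eventually_elim (simp add: d_def)
    then show False using nae by simp
  qed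
  have Jd: "J d d < 0" by (rule J_neg[OF dg d0 dnz])
  have rho: "good (\<lambda>x. t * r1 x + (1 - t) * r2 x)" by (rule good_lin[OF r1(1) r2(1)])
  have aerho: "AE x in lebesgue. t * s1 x + (1 - t) * s2 x = t * r1 x + (1 - t) * r2 x"
    using r1(2) r2(2) by eventually_elim simp
  have sigm: "(\<lambda>x. t * s1 x + (1 - t) * s2 x) \<in> borel_measurable lebesgue" using sm1 sm2 by simp
  have E1: "E_TF K xs s1 = - Vi K xs r1 - 1/2 * J r1 r1" by (rule E_rep[OF sm1 r1(1) r1(2)])
  have E2: "E_TF K xs s2 = - Vi K xs r2 - 1/2 * J r2 r2" by (rule E_rep[OF sm2 r2(1) r2(2)])
  have Es: "E_TF K xs (\<lambda>x. t * s1 x + (1 - t) * s2 x)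
      = - Vi K xs (\<lambda>x. t * r1 x + (1 - t) * r2 x) - 1/2 * J (\<lambda>x. t * r1 x + (1 - t) * r2 x) (\<lambda>x. t * r1 x + (1 - t) * r2 x)"
    by (rule E_rep[OF sigm rho aerho])
  have Vl: "Vi K xs (\<lambda>x. t * r1 x + (1 - t) * r2 x) = t * Vi K xs r1 + (1 - t) * Vi K xs r2"
    by (rule Vi_lin[OF r1(1) r2(1)])
  have Jl: "J (\<lambda>x. t * r1 x + (1 - t) * r2 x) (\<lambda>x. t * r1 x + (1 - t) * r2 x)
      = t * J r1 r1 + (1 - t) * J r2 r2 - t * (1 - t) * J d d"
    unfolding d_def by (rule J_convex_identity[OF r1(1) r2(1)])
  have tt: "0 < t * (1 - t)" using t by simp
  have "E_TF K xs (\<lambda>x. t * s1 x + (1 - t) * s2 x) - (t * E_TF K xs s1 + (1 - t) * E_TF K xs s2)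
      = 1/2 * (t * (1 - t)) * J d d"
    unfolding Es E1 E2 Vl Jl by (simp add: field_simps)
  also have "\<dots> < 0" using tt Jd by (simp add: mult_pos_neg)
  finally show "E_TF K xs (\<lambda>x. t * s1 x + (1 - t) * s2 x) < t * E_TF K xs s1 + (1 - t) * E_TF K xs s2" by simp
qed

theorem lemma3p3:
  fixes K :: nat and xs :: "nat \<Rightarrow> real ^ 2"
  assumes "K \<ge> 1"
  shows "(\<forall>s1 \<in> M_TF K. \<forall>s2 \<in> M_TF K. \<forall>t::real. 0 < t \<and> t < 1 \<longrightarrow>
            (\<lambda>x. t * s1 x + (1 - t) * s2 x) \<in> M_TF K \<and>
            (\<not> (AE x in lebesgue. s1 x = s2 x) \<longrightarrow>
              E_TF K xs (\<lambda>x. t * s1 x + (1 - t) * s2 x)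
                < t * E_TF K xs s1 + (1 - t) * E_TF K xs s2))
       \<and> (\<forall>s1 \<in> M_TF K. \<forall>s2 \<in> M_TF K.
            (\<forall>s \<in> M_TF K. E_TF K xs s1 \<le> E_TF K xs s) \<and>
            (\<forall>s \<in> M_TF K. E_TF K xs s2 \<le> E_TF K xs s) \<longrightarrow>
            (AE x in lebesgue. s1 x = s2 x))"
proof (intro conjI ballI allI impI)
  fix s1 s2 and t :: real assume s1: "s1 \<in> M_TF K" and s2: "s2 \<in> M_TF K" and t: "0 < t \<and> t < 1"
  show "(\<lambda>x. t * s1 x + (1 - t) * s2 x) \<in> M_TF K" using strict_convex(1)[OF s1 s2] t by auto
  assume "\<not> (AE x in lebesgue. s1 x = s2 x)"
  then show "E_TF K xs (\<lambda>x. t * s1 x + (1 - t) * s2 x) < t * E_TF K xs s1 + (1 - t) * E_TF K xs s2"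
    using strict_convex(2)[OF s1 s2] t by auto
next
  fix s1 s2 assume s1: "s1 \<in> M_TF K" and s2: "s2 \<in> M_TF K"
    and min: "(\<forall>s \<in> M_TF K. E_TF K xs s1 \<le> E_TF K xs s) \<and> (\<forall>s \<in> M_TF K. E_TF K xs s2 \<le> E_TF K xs s)"
  show "AE x in lebesgue. s1 x = s2 x"
  proof (rule ccontr)
    assume nae: "\<not> (AE x in lebesgue. s1 x = s2 x)"
    have half: "0 < (1/2::real)" "(1/2::real) < 1" by auto
    have mem: "(\<lambda>x. 1/2 * s1 x + (1 - 1/2) * s2 x) \<in> M_TF K" by (rule strict_convex(1)[OF s1 s2 half])
    have lt: "E_TF K xs (\<lambda>x. 1/2 * s1 x + (1 - 1/2) * s2 x) < 1/2 * E_TF K xs s1 + (1 - 1/2) * E_TF K xs s2"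
      by (rule strict_convex(2)[OF s1 s2 half nae])
    have "E_TF K xs s1 \<le> E_TF K xs (\<lambda>x. 1/2 * s1 x + (1 - 1/2) * s2 x)" using min mem by blast
    moreover have "E_TF K xs s2 \<le> E_TF K xs (\<lambda>x. 1/2 * s1 x + (1 - 1/2) * s2 x)" using min mem by blast
    ultimately show False using lt by simp
  qed
qed

end
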